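(* For each $n$ let $\boldsymbol{d}_n\in\mathbb{N}^n$ be a degree vector (all entries $\ge1$, sum even) and let $G_n=\mathrm{CM}_n(\boldsymbol{d}_n)$ be the undirected configuration model. Let $\phi_n$ be a uniformly chosen vertex of $[n]$ and $D_n=d_{\phi_n}$. Assume $D_n\to D$ in distribution and $\mathbb{E}[D_n]\to\mathbb{E}[D]<\infty$. Let $c\in(0,1)$ and let $\boldsymbol{R}^{(G_n)}$ be the PageRank vector of $G_n$ with damping factor $c$. Then for all $n,k$, $$\mathbb{P}(R^{(G_n)}_{\phi_n}>k)\le\mathbb{P}(D_n>k),$$ and for any $\beta>\frac{4\mathbb{E}[D]}{c(1-c)}$, $$\liminf_{k\to\infty}\liminf_{n\to\infty}\frac{\mathbb{P}(R^{(G_n)}_{\phi_n}>k)}{\mathbb{P}(D_n>\beta k)}\ge1.$$ Moreover, if $D$ has a power-law distribution with exponent $\tau>1$ and tail function $\mathcal{L}$, then there is $0<\underline a\le1$ such that the limiting root-PageRank $R_\phi$ satisfies $$\underline a\,\mathcal{L}(k)k^{-(\tau-1)}\le\mathbb{P}(R_\phi>k)\le\mathcal{L}(k)k^{-(\tau-1)}\qquad\text{for every }k\in(0,\infty).$$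
   Context: $\mathrm{CM}_n(\boldsymbol{d})$: vertex $i\in[n]$ receives $d_i$ half-edges; a uniformly random perfect matching of all $|\boldsymbol{d}|=\sum_id_i$ half-edges (via a uniform permutation) is formed and matched half-edges become edges. PageRank on a finite graph: with $p_{ij}=a_{ij}/d_i$ ($a_{ij}$ the adjacency entries), $\boldsymbol{R}$ is the unique solution of $\boldsymbol{R}=c\boldsymbol{R}\boldsymbol{P}+(1-c)\boldsymbol{1}_n$, i.e. $R_k=(1-c)\sum_{s\ge0}c^s\sum_j(\boldsymbol{P}^s)_{jk}$. Probabilities are over both the random graph and the uniform root. The limiting root-PageRank $R_\phi$ is the root-PageRank $R_\phi=(1-c)\sum_{s\ge0}c^s\sum_j(\boldsymbol{P}^s)_{j\phi}$ of the unimodular branching-process tree with root-degree distribution $p_k=\mathbb{P}(D=k)$ (the root has $D$ children, every other vertex has an independent number of children with law $p^*_k=(k+1)p_{k+1}/\mathbb{E}[D]$), which is the local weak limit of $G_n$; equivalently $R_\phi$ is the distributional limit of $R^{(G_n)}_{\phi_n}$. A function $\mathcal{L}:(0,\infty)\to(0,\infty)$ is slowly varying if $\mathcal{L}(ax)/\mathcal{L}(x)\to1$ as $x\to\infty$ for every $a>0$; $X$ has a power-law distribution with exponent $\tau>1$ and tail function $\mathcal{L}$ if $\mathcal{L}$ is slowly varying and $\mathbb{P}(X>x)=\mathcal{L}(x)x^{-(\tau-1)}$ for all $x>0$. *)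

theory Defs
  imports "HOL-Probability.Probability"
begin

text \<open>A degree vector for n vertices is a function dv :: nat => nat, read on {..<n}.
  Half-edges are numbered 0 ..< sum dv {..<n}; vertex i owns the block below.\<close>

definition half_edges :: "(nat \<Rightarrow> nat) \<Rightarrow> nat \<Rightarrow> nat set" where
  "half_edges dv i = {sum dv {..<i} ..< sum dv {..<Suc i}}"

definition matchings :: "(nat \<Rightarrow> nat) \<Rightarrow> nat \<Rightarrow> (nat \<Rightarrow> nat) set" where
  "matchings dv n = {m. m permutes {..<sum dv {..<n}} \<and>
      (\<forall>h < sum dv {..<n}. m h \<noteq> h \<and> m (m h) = h)}"

text \<open>Adjacency entry a_ij: number of half-edges of i matched to half-edges of j
  (a self-loop counts twice in a_ii, so rows sum to the degrees).\<close>
definition cm_adj :: "(nat \<Rightarrow> nat) \<Rightarrow> (nat \<Rightarrow> nat) \<Rightarrow> nat \<Rightarrow> nat \<Rightarrow> nat" where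
  "cm_adj dv m i j = card {h \<in> half_edges dv i. m h \<in> half_edges dv j}"

text \<open>col_sum dv n m s k = sum_j (P^s)_{jk}, with p_ij = a_ij / d_i.\<close>
primrec col_sum :: "(nat \<Rightarrow> nat) \<Rightarrow> nat \<Rightarrow> (nat \<Rightarrow> nat) \<Rightarrow> nat \<Rightarrow> nat \<Rightarrow> real" where
  "col_sum dv n m 0 k = 1"
| "col_sum dv n m (Suc s) k =
     (\<Sum>j<n. col_sum dv n m s j * real (cm_adj dv m j k) / real (dv j))"

definition pagerank :: "real \<Rightarrow> (nat \<Rightarrow> nat) \<Rightarrow> nat \<Rightarrow> (nat \<Rightarrow> nat) \<Rightarrow> nat \<Rightarrow> real" where
  "pagerank c dv n m k = (1 - c) * (\<Sum>s. c ^ s * col_sum dv n m s k)"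

definition cm_root :: "(nat \<Rightarrow> nat) \<Rightarrow> nat \<Rightarrow> ((nat \<Rightarrow> nat) \<times> nat) pmf" where
  "cm_root dv n = pair_pmf (pmf_of_set (matchings dv n)) (pmf_of_set {..<n})"

definition prob_root_pr_gt :: "real \<Rightarrow> (nat \<Rightarrow> nat) \<Rightarrow> nat \<Rightarrow> real \<Rightarrow> real" where
  "prob_root_pr_gt c dv n k =
     measure_pmf.prob (cm_root dv n) {(m, i). pagerank c dv n m i > k}"

definition deg_law :: "(nat \<Rightarrow> nat) \<Rightarrow> nat \<Rightarrow> nat pmf" where
  "deg_law dv n = map_pmf dv (pmf_of_set {..<n})"

text \<open>Vertices are lists of naturals; N v = number of children of v; the vertices of the tree
  are those v = [i1,...,ik] with each index below N of the corresponding prefix. Children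
  of v: v @ [i], i < N v; parent of v \<noteq> []: butlast v.\<close>

definition tree_deg :: "(nat list \<Rightarrow> nat) \<Rightarrow> nat list \<Rightarrow> nat" where
  "tree_deg N v = N v + (if v = [] then 0 else 1)"

text \<open>tree_col_sum N s v = sum_j (P^s)_{jv} on the tree.\<close>
primrec tree_col_sum :: "(nat list \<Rightarrow> nat) \<Rightarrow> nat \<Rightarrow> nat list \<Rightarrow> real" where
  "tree_col_sum N 0 v = 1"
| "tree_col_sum N (Suc s) v =
     (\<Sum>i<N v. tree_col_sum N s (v @ [i]) / real (tree_deg N (v @ [i])))
     + (if v = [] then 0
        else tree_col_sum N s (butlast v) / real (tree_deg N (butlast v)))"

text \<open>Root PageRank of the tree (as extended nonnegative real, so it is always defined).\<close>
definition tree_root_pr :: "real \<Rightarrow> (nat list \<Rightarrow> nat) \<Rightarrow> ennreal" where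
  "tree_root_pr c N = (\<Sum>s. ennreal ((1 - c) * c ^ s * tree_col_sum N s []))"

definition size_biased :: "nat pmf \<Rightarrow> nat pmf" where
  "size_biased p = embed_pmf (\<lambda>k. real (Suc k) * pmf p (Suc k) / measure_pmf.expectation p real)"

definition ubp_tree :: "nat pmf \<Rightarrow> (nat list \<Rightarrow> nat) measure" where
  "ubp_tree p = (\<Pi>\<^sub>M v\<in>UNIV. measure_pmf (if v = [] then p else size_biased p))"

definition prob_limit_pr_gt :: "real \<Rightarrow> nat pmf \<Rightarrow> real \<Rightarrow> real" where
  "prob_limit_pr_gt c p k =
     measure (ubp_tree p) {N \<in> space (ubp_tree p). tree_root_pr c N > ennreal k}"

definition slowly_varying :: "(real \<Rightarrow> real) \<Rightarrow> bool" where
  "slowly_varying L \<longleftrightarrow> (\<forall>x>0. L x > 0) \<and>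
     (\<forall>a>0. ((\<lambda>x. L (a * x) / L x) \<longlongrightarrow> 1) at_top)"

end

theory Submission
  imports Defs "HOL-Real_Asymp.Real_Asymp"
begin


definition matchW :: "nat set \<Rightarrow> (nat \<Rightarrow> nat) set" where
  "matchW W = {m. (\<forall>x. x \<notin> W \<longrightarrow> m x = x) \<and> (\<forall>h\<in>W. m h \<in> W \<and> m h \<noteq> h \<and> m (m h) = h)}"

fun dfact :: "nat \<Rightarrow> nat" where
  "dfact 0 = 1"
| "dfact (Suc 0) = 0"
| "dfact (Suc (Suc k)) = Suc k * dfact k"

lemma matchings_eq: "matchings dv n = matchW {..<sum dv {..<n}}"
proof -
  let ?W = "{..<sum dv {..<n}}"
  have 1: "m \<in> matchW ?W" if "m \<in> matchings dv n" for m
    using that unfolding matchings_def matchW_def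
    by (auto simp: permutes_not_in) (metis lessThan_iff permutes_in_image)
  have 2: "m \<in> matchings dv n" if "m \<in> matchW ?W" for m
  proof -
    have a: "\<forall>x. x \<notin> ?W \<longrightarrow> m x = x" and b: "\<forall>h\<in>?W. m h \<in> ?W \<and> m h \<noteq> h \<and> m (m h) = h"
      using that unfolding matchW_def by auto
    have inv: "m (m x) = x" for x using a b by (cases "x \<in> ?W") auto
    have "m permutes ?W"
      unfolding permutes_def
    proof (intro conjI allI)
      show "x \<notin> ?W \<longrightarrow> m x = x" for x using a by auto
      show "\<exists>!x. m x = y" for y
        by (metis inv)
    qed
    then show ?thesis using b unfolding matchings_def by auto
  qed
  show ?thesis using 1 2 by blast
qed

lemma finite_matchW: "finite W \<Longrightarrow> finite (matchW W)"
proof -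
  assume W: "finite W"
  have "matchW W \<subseteq> {p. p permutes W}"
  proof
    fix m assume m: "m \<in> matchW W"
    have a: "\<forall>x. x \<notin> W \<longrightarrow> m x = x" and b: "\<forall>h\<in>W. m h \<in> W \<and> m h \<noteq> h \<and> m (m h) = h"
      using m unfolding matchW_def by auto
    have inv: "m (m x) = x" for x using a b by (cases "x \<in> W") auto
    have "m permutes W" unfolding permutes_def using a by (metis inv)
    then show "m \<in> {p. p permutes W}" by simp
  qed
  then show ?thesis using finite_permutations[OF W] by (rule finite_subset)
qed

lemma matchW_restrict_card:
  assumes W: "finite W" and xy: "x \<in> W" "y \<in> W" "x \<noteq> y"
  shows "card {m\<in>matchW W. m x = y \<and> P m} = card {m'\<in>matchW (W - {x,y}). P (m'(x:=y, y:=x))}"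
proof -
  let ?A = "{m\<in>matchW W. m x = y \<and> P m}"
  let ?B = "{m'\<in>matchW (W - {x,y}). P (m'(x:=y, y:=x))}"
  have "bij_betw (\<lambda>m. m(x:=x, y:=y)) ?A ?B"
  proof (rule bij_betw_byWitness[where f'="\<lambda>m'. m'(x:=y, y:=x)"])
    show "\<forall>a\<in>?A. (a(x:=x, y:=y))(x:=y, y:=x) = a"
    proof
      fix a assume "a \<in> ?A"
      then have "a x = y" "a y = x" using xy unfolding matchW_def by auto
      then show "(a(x:=x, y:=y))(x:=y, y:=x) = a" by (auto simp: fun_eq_iff)
    qed
    show "\<forall>a'\<in>?B. (a'(x:=y, y:=x))(x:=x, y:=y) = a'"
    proof
      fix a assume "a \<in> ?B"
      then have "a x = x" "a y = y" unfolding matchW_def by auto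
      then show "(a(x:=y, y:=x))(x:=x, y:=y) = a" by (auto simp: fun_eq_iff)
    qed
    show "(\<lambda>m. m(x:=x, y:=y)) ` ?A \<subseteq> ?B"
    proof (rule image_subsetI)
      fix m assume "m \<in> ?A"
      then have m: "m \<in> matchW W" "m x = y" "P m" by auto
      have myx: "m y = x" using m xy unfolding matchW_def by auto
      have "m(x:=x, y:=y) \<in> matchW (W - {x,y})"
        using m(1) xy myx unfolding matchW_def by (auto; metis)+
      moreover have "P ((m(x:=x, y:=y))(x:=y, y:=x))"
      proof -
        have "(m(x:=x, y:=y))(x:=y, y:=x) = m" using m(2) myx xy by (auto simp: fun_eq_iff)
        then show ?thesis using m(3) by simp
      qed
      ultimately show "m(x:=x, y:=y) \<in> ?B" by simp
    qed
    show "(\<lambda>m'. m'(x:=y, y:=x)) ` ?B \<subseteq> ?A"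
    proof (rule image_subsetI)
      fix m assume "m \<in> ?B"
      then have m: "m \<in> matchW (W - {x,y})" "P (m(x:=y, y:=x))" by auto
      have "m(x:=y, y:=x) \<in> matchW W"
        using m(1) xy unfolding matchW_def by (auto; metis)+
      then show "m(x:=y, y:=x) \<in> ?A" using m(2) xy by simp
    qed
  qed
  then show ?thesis by (rule bij_betw_same_card)
qed

lemma matchW_empty: "matchW {} = {id}"
  unfolding matchW_def by (auto simp: fun_eq_iff)

lemma card_fiber1_aux:
  assumes W: "finite W" and xy: "x \<in> W" "y \<in> W" "x \<noteq> y"
  shows "card {m\<in>matchW W. m x = y} = card (matchW (W - {x,y}))"
  using matchW_restrict_card[OF assms, where P="\<lambda>_. True"] by simp

lemma card_matchW: "finite W \<Longrightarrow> card (matchW W) = dfact (card W)"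
proof (induction "card W" arbitrary: W rule: less_induct)
  case less
  show ?case
  proof (cases "W = {}")
    case True
    then show ?thesis by (simp add: matchW_empty)
  next
    case False
    then obtain x where x: "x \<in> W" by auto
    have eq: "matchW W = (\<Union>y\<in>W-{x}. {m\<in>matchW W. m x = y})"
      using x unfolding matchW_def by auto
    have fin: "finite (matchW W)" using finite_matchW less.prems by blast
    have "card (matchW W) = card (\<Union>y\<in>W-{x}. {m\<in>matchW W. m x = y})"
      by (rule arg_cong[OF eq])
    also have "\<dots> = (\<Sum>y\<in>W-{x}. card {m\<in>matchW W. m x = y})"
    proof (rule card_UN_disjoint)
      show "finite (W - {x})" using less.prems by simp
      show "\<forall>i\<in>W - {x}. finite {m \<in> matchW W. m x = i}" using fin by simp
      show "\<forall>i\<in>W - {x}. \<forall>j\<in>W - {x}. i \<noteq> j \<longrightarrow> {m \<in> matchW W. m x = i} \<inter> {m \<in> matchW W. m x = j} = {}"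
        by blast
    qed
    also have "\<dots> = (\<Sum>y\<in>W-{x}. dfact (card W - 2))"
    proof (rule sum.cong)
      fix y assume y: "y \<in> W - {x}"
      have c: "card (W - {x,y}) = card W - 2" using x y less.prems
        by (simp add: card_Diff_subset)
      have "card {m\<in>matchW W. m x = y} = card (matchW (W - {x,y}))"
        using card_fiber1_aux[OF less.prems x] y by auto
      also have "\<dots> = dfact (card (W - {x,y}))"
      proof -
        have "card W > 0" using less.prems x by (auto simp: card_gt_0_iff)
        then have "card (W - {x,y}) < card W" using c by simp
        then show ?thesis using less.hyps[of "W - {x,y}"] less.prems by simp
      qed
      finally show "card {m\<in>matchW W. m x = y} = dfact (card W - 2)" using c by simp
    qed simp
    also have "\<dots> = (card W - 1) * dfact (card W - 2)"
      using x less.prems by simp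
    also have "\<dots> = dfact (card W)"
    proof -
      obtain k where k: "card W = Suc k" using False less.prems by (metis card_0_eq not0_implies_Suc)
      show ?thesis
      proof (cases k)
        case 0 then show ?thesis using k by simp
      next
        case (Suc j) then show ?thesis using k by simp
      qed
    qed
    finally show ?thesis .
  qed
qed
lemma card_fiber1:
  assumes W: "finite W" and xy: "x \<in> W" "y \<in> W" "x \<noteq> y"
  shows "card {m\<in>matchW W. m x = y} = dfact (card W - 2)"
proof -
  have "card (W - {x,y}) = card W - 2" using assms by (simp add: card_Diff_subset)
  then show ?thesis using card_fiber1_aux[OF assms] card_matchW[of "W - {x,y}"] W by simp
qed

lemma card_fiber2:
  assumes W: "finite W" and in_W: "h \<in> W" "a \<in> W" "h' \<in> W" "b \<in> W"
    and dist: "h \<noteq> a" "h \<noteq> h'" "h \<noteq> b" "a \<noteq> h'" "a \<noteq> b" "h' \<noteq> b"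
  shows "card {m\<in>matchW W. m h = a \<and> m h' = b} = dfact (card W - 4)"
proof -
  have "card {m\<in>matchW W. m h = a \<and> m h' = b}
      = card {m'\<in>matchW (W - {h,a}). (m'(h:=a, a:=h)) h' = b}"
    using matchW_restrict_card[OF W in_W(1,2) dist(1), where P="\<lambda>m. m h' = b"] by simp
  also have "\<dots> = card {m'\<in>matchW (W - {h,a}). m' h' = b}"
    using dist by simp
  also have "\<dots> = dfact (card (W - {h,a}) - 2)"
    by (rule card_fiber1) (use assms in auto)
  also have "card (W - {h,a}) = card W - 2" using assms by (simp add: card_Diff_subset)
  finally show ?thesis by simp
qed


lemma half_edges_Suc_union: "{..<sum dv {..<Suc j}} = {..<sum dv {..<j}} \<union> half_edges dv j"
  unfolding half_edges_def by auto

lemma card_half_edges: "card (half_edges dv j) = dv j"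
  unfolding half_edges_def by simp

lemma finite_half_edges[simp]: "finite (half_edges dv j)"
  unfolding half_edges_def by simp

lemma psum_mono: "i \<le> j \<Longrightarrow> sum dv {..<i} \<le> sum (dv::nat\<Rightarrow>nat) {..<j}"
  by (rule sum_mono2) auto

lemma half_edges_sub: "j < n \<Longrightarrow> half_edges dv j \<subseteq> {..<sum dv {..<n}}"
  unfolding half_edges_def using psum_mono[of "Suc j" n dv] by auto

lemma half_edges_disj: "i \<noteq> j \<Longrightarrow> half_edges dv i \<inter> half_edges dv j = {}"
proof -
  assume ij: "i \<noteq> j"
  { fix i j :: nat assume "i < j"
    then have "sum dv {..<Suc i} \<le> sum dv {..<j}" by (intro psum_mono) simp
    then have "half_edges dv i \<inter> half_edges dv j = {}" unfolding half_edges_def by auto }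
  note * = this
  show ?thesis
  proof (cases "i < j")
    case True then show ?thesis using * by blast
  next
    case False then have "j < i" using ij by simp
    then show ?thesis using *[of j i] by blast
  qed
qed

lemma half_edges_Union: "(\<Union>j<n. half_edges dv j) = {..<sum dv {..<n}}"
proof (induction n)
  case 0 then show ?case by simp
next
  case (Suc n)
  have "(\<Union>j<Suc n. half_edges dv j) = (\<Union>j<n. half_edges dv j) \<union> half_edges dv n"
    by (simp add: lessThan_Suc Un_commute)
  then show ?case using Suc half_edges_Suc_union by simp
qed

lemma half_edges_unique: "a \<in> half_edges dv i \<Longrightarrow> a \<in> half_edges dv j \<Longrightarrow> i = j"
  using half_edges_disj by blast

definition fw :: "(nat \<Rightarrow> nat) \<Rightarrow> nat \<Rightarrow> nat \<Rightarrow> real" where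
  "fw dv n a = (\<Sum>j<n. if a \<in> half_edges dv j then 1 / real (dv j) else 0)"

lemma fw_in: assumes "v < n" "a \<in> half_edges dv v" shows "fw dv n a = 1 / real (dv v)"
proof -
  have "fw dv n a = (\<Sum>j\<in>{v}. if a \<in> half_edges dv j then 1 / real (dv j) else 0)"
    unfolding fw_def
    by (rule sum.mono_neutral_right) (use assms half_edges_unique in auto)
  then show ?thesis using assms by simp
qed

lemma fw_nonneg: "0 \<le> fw dv n a"
  unfolding fw_def by (auto intro: sum_nonneg)

lemma fw_le1: "fw dv n a \<le> 1"
proof (cases "\<exists>v<n. a \<in> half_edges dv v")
  case True
  then obtain v where v: "v < n" "a \<in> half_edges dv v" by auto
  then have "half_edges dv v \<noteq> {}" by auto
  then have "card (half_edges dv v) \<noteq> 0" by simp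
  then have "dv v \<noteq> 0" by (simp add: card_half_edges)
  then show ?thesis using fw_in[OF v] by simp
next
  case False
  then have "fw dv n a = 0" unfolding fw_def by (auto intro: sum.neutral)
  then show ?thesis by simp
qed

lemma fw_total:
  assumes pos: "\<And>i. i < n \<Longrightarrow> 1 \<le> dv i"
  shows "(\<Sum>a<sum dv {..<n}. fw dv n a) = real n"
proof -
  have "(\<Sum>a<sum dv {..<n}. fw dv n a)
      = (\<Sum>j<n. \<Sum>a<sum dv {..<n}. if a \<in> half_edges dv j then 1 / real (dv j) else 0)"
    unfolding fw_def by (rule sum.swap)
  also have "\<dots> = (\<Sum>j<n. 1::real)"
  proof (rule sum.cong[OF refl])
    fix j assume j: "j \<in> {..<n}"
    have "(\<Sum>a<sum dv {..<n}. if a \<in> half_edges dv j then 1 / real (dv j) else 0)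
        = (\<Sum>a\<in>half_edges dv j. 1 / real (dv j))"
      using half_edges_sub[of j n dv] j
      by (simp add: sum.If_cases Int_absorb1)
    also have "\<dots> = 1" using pos[of j] j by (simp add: card_half_edges)
    finally show "(\<Sum>a<sum dv {..<n}. if a \<in> half_edges dv j then 1 / real (dv j) else 0) = 1" .
  qed
  finally show ?thesis by simp
qed

lemma matchW_props:
  assumes "m \<in> matchW W"
  shows "x \<notin> W \<Longrightarrow> m x = x" and "h \<in> W \<Longrightarrow> m h \<in> W"
    and "h \<in> W \<Longrightarrow> m h \<noteq> h" and "m (m x) = x"
proof -
  have a: "\<forall>x. x \<notin> W \<longrightarrow> m x = x" and b: "\<forall>h\<in>W. m h \<in> W \<and> m h \<noteq> h \<and> m (m h) = h"
    using assms unfolding matchW_def by auto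
  show "x \<notin> W \<Longrightarrow> m x = x" using a by auto
  show "h \<in> W \<Longrightarrow> m h \<in> W" using b by auto
  show "h \<in> W \<Longrightarrow> m h \<noteq> h" using b by auto
  show "m (m x) = x" using a b by (cases "x \<in> W") auto
qed

lemma cm_adj_sym:
  assumes m: "m \<in> matchW {..<sum dv {..<n}}" and ij: "i < n" "j < n"
  shows "cm_adj dv m i j = cm_adj dv m j i"
proof -
  have "bij_betw m {h \<in> half_edges dv i. m h \<in> half_edges dv j} {h \<in> half_edges dv j. m h \<in> half_edges dv i}"
    by (rule bij_betw_byWitness[where f'=m]) (use matchW_props(4)[OF m] in auto)
  then show ?thesis unfolding cm_adj_def by (rule bij_betw_same_card)
qed

lemma cm_adj_rowsum:
  assumes m: "m \<in> matchW {..<sum dv {..<n}}" and k: "k < n"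
  shows "(\<Sum>j<n. cm_adj dv m k j) = dv k"
proof -
  have "(\<Sum>j<n. cm_adj dv m k j) = card (\<Union>j<n. {h \<in> half_edges dv k. m h \<in> half_edges dv j})"
    unfolding cm_adj_def
    by (rule card_UN_disjoint[symmetric]) (auto dest: half_edges_unique)
  also have "(\<Union>j<n. {h \<in> half_edges dv k. m h \<in> half_edges dv j}) = half_edges dv k"
  proof -
    have "m h \<in> (\<Union>j<n. half_edges dv j)" if "h \<in> half_edges dv k" for h
      using that half_edges_sub[OF k] matchW_props(2)[OF m] half_edges_Union[where n=n and dv=dv] by auto
    then show ?thesis by blast
  qed
  finally show ?thesis by (simp add: card_half_edges)
qed

lemma card_filter_sum: "finite A \<Longrightarrow> real (card {h\<in>A. P h}) = (\<Sum>h\<in>A. if P h then 1 else 0)"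
  by (simp add: sum.If_cases Int_def)

lemma col_sum_1:
  assumes m: "m \<in> matchW {..<sum dv {..<n}}" and v: "v < n"
  shows "col_sum dv n m 1 v = (\<Sum>h\<in>half_edges dv v. fw dv n (m h))"
proof -
  have "col_sum dv n m 1 v = (\<Sum>j<n. real (cm_adj dv m v j) / real (dv j))"
    using cm_adj_sym[OF m _ v] by simp
  also have "\<dots> = (\<Sum>j<n. \<Sum>h\<in>half_edges dv v. if m h \<in> half_edges dv j then 1 / real (dv j) else 0)"
    unfolding cm_adj_def
    by (rule sum.cong[OF refl]) (simp add: card_filter_sum sum_divide_distrib, rule sum.cong, auto)
  also have "\<dots> = (\<Sum>h\<in>half_edges dv v. fw dv n (m h))"
    unfolding fw_def by (rule sum.swap)
  finally show ?thesis .
qed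

lemma col_sum_bounds:
  assumes m: "m \<in> matchW {..<sum dv {..<n}}" and pos: "\<And>i. i < n \<Longrightarrow> 1 \<le> dv i"
  shows "k < n \<Longrightarrow> 0 \<le> col_sum dv n m s k \<and> col_sum dv n m s k \<le> real (dv k)"
proof (induction s arbitrary: k)
  case 0 then show ?case using pos[of k] by simp
next
  case (Suc s)
  have nn: "0 \<le> col_sum dv n m (Suc s) k"
    using Suc.IH by (auto intro!: sum_nonneg divide_nonneg_nonneg)
  have "col_sum dv n m (Suc s) k \<le> (\<Sum>j<n. real (cm_adj dv m j k))"
    unfolding col_sum.simps
  proof (rule sum_mono)
    fix j assume j: "j \<in> {..<n}"
    have d: "real (dv j) > 0" using pos[of j] j by simp
    have "col_sum dv n m s j * real (cm_adj dv m j k) \<le> real (dv j) * real (cm_adj dv m j k)"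
      using Suc.IH[of j] j by (intro mult_right_mono) auto
    then show "col_sum dv n m s j * real (cm_adj dv m j k) / real (dv j) \<le> real (cm_adj dv m j k)"
      using d by (simp add: divide_le_eq mult.commute)
  qed
  also have "\<dots> = (\<Sum>j<n. real (cm_adj dv m k j))"
    using cm_adj_sym[OF m _ Suc.prems] by (intro sum.cong) auto
  also have "\<dots> = real (dv k)" using cm_adj_rowsum[OF m Suc.prems]
    by (metis of_nat_sum)
  finally show ?case using nn by simp
qed


lemma pagerank_bounds:
  assumes m: "m \<in> matchW {..<sum dv {..<n}}" and pos: "\<And>i. i < n \<Longrightarrow> 1 \<le> dv i"
    and k: "k < n" and c: "0 < c" "c < 1"
  shows "summable (\<lambda>s. c ^ s * col_sum dv n m s k)"
    and "pagerank c dv n m k \<le> real (dv k)"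
    and "(1 - c) * (1 + c * col_sum dv n m 1 k) \<le> pagerank c dv n m k"
proof -
  note bd = col_sum_bounds[OF m pos k]
  have sg: "summable (\<lambda>s. c ^ s * real (dv k))"
    using c by (intro summable_mult2 summable_geometric) simp
  show sm: "summable (\<lambda>s. c ^ s * col_sum dv n m s k)"
    by (rule summable_comparison_test'[OF sg, where N=0]) (use bd c in \<open>auto intro!: mult_left_mono\<close>)
  have "(\<Sum>s. c ^ s * col_sum dv n m s k) \<le> (\<Sum>s. c ^ s * real (dv k))"
    by (rule suminf_le[OF _ sm sg]) (use bd c in \<open>auto intro!: mult_left_mono\<close>)
  also have "\<dots> = real (dv k) / (1 - c)"
    using c by (simp add: suminf_mult2[symmetric] suminf_geometric)
  finally show "pagerank c dv n m k \<le> real (dv k)"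
    unfolding pagerank_def using c by (simp add: field_simps)
  have "(\<Sum>s<2. c ^ s * col_sum dv n m s k) \<le> (\<Sum>s. c ^ s * col_sum dv n m s k)"
    by (rule sum_le_suminf[OF sm]) (use bd c in auto)
  then have "1 + c * col_sum dv n m 1 k \<le> (\<Sum>s. c ^ s * col_sum dv n m s k)"
    by (simp add: numeral_2_eq_2)
  then show "(1 - c) * (1 + c * col_sum dv n m 1 k) \<le> pagerank c dv n m k"
    unfolding pagerank_def using c by (intro mult_left_mono) auto
qed

lemma dfact_even_pos: "dfact (2 * k) > 0"
  by (induction k) (auto simp: numeral_2_eq_2)

lemma matchings_ne:
  assumes "even (sum dv {..<n})"
  shows "finite (matchings dv n)" "matchings dv n \<noteq> {}"
proof -
  show "finite (matchings dv n)" by (simp add: matchings_eq finite_matchW)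
  obtain k where "sum dv {..<n} = 2 * k" using assms by auto
  then have "card (matchings dv n) > 0"
    by (simp add: matchings_eq card_matchW dfact_even_pos)
  then show "matchings dv n \<noteq> {}" by auto
qed

lemma pair_prob_formula:
  assumes M: "finite M" "M \<noteq> {}" and I: "finite I" "I \<noteq> {}"
  shows "measure (pair_pmf (pmf_of_set M) (pmf_of_set I)) A
       = (\<Sum>i\<in>I. real (card {m\<in>M. (m, i) \<in> A}) / real (card M)) / real (card I)"
proof -
  let ?p = "pair_pmf (pmf_of_set M) (pmf_of_set I)"
  have sp: "set_pmf ?p = M \<times> I" using M I by simp
  have "measure ?p A = measure ?p (A \<inter> (M \<times> I))"
    using measure_Int_set_pmf[of ?p A] sp by simp
  also have "\<dots> = (\<Sum>x\<in>A \<inter> (M \<times> I). pmf ?p x)"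
    using M I by (intro measure_measure_pmf_finite) auto
  also have "\<dots> = (\<Sum>x\<in>{x\<in>M \<times> I. x \<in> A}. 1 / (real (card M) * real (card I)))"
    using M I by (intro sum.cong) (auto simp: pmf_pair M I)
  also have "\<dots> = (\<Sum>x\<in>M \<times> I. if x \<in> A then 1 / (real (card M) * real (card I)) else 0)"
    using M I by (intro sum.inter_filter) auto
  also have "\<dots> = (\<Sum>m\<in>M. \<Sum>i\<in>I. if (m, i) \<in> A then 1 / (real (card M) * real (card I)) else 0)"
    by (subst sum.cartesian_product) (rule sum.cong; auto)
  also have "\<dots> = (\<Sum>i\<in>I. \<Sum>m\<in>M. if (m, i) \<in> A then 1 / (real (card M) * real (card I)) else 0)"
    by (rule sum.swap)
  also have "\<dots> = (\<Sum>i\<in>I. real (card {m\<in>M. (m, i) \<in> A}) / (real (card M) * real (card I)))"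
    using M by (intro sum.cong refl) (simp add: card_filter_sum sum_divide_distrib[symmetric] sum.If_cases)
  also have "\<dots> = (\<Sum>i\<in>I. real (card {m\<in>M. (m, i) \<in> A}) / real (card M)) / real (card I)"
    by (simp add: sum_divide_distrib divide_divide_eq_left)
  finally show ?thesis .
qed

lemma deg_prob_formula:
  assumes "n \<ge> 1"
  shows "measure_pmf.prob (deg_law dv n) {j. P (real j)} = real (card {i\<in>{..<n}. P (real (dv i))}) / real n"
proof -
  have "measure_pmf.prob (deg_law dv n) {j. P (real j)} = measure_pmf.prob (pmf_of_set {..<n}) (dv -` {j. P (real j)})"
    unfolding deg_law_def by simp
  also have "\<dots> = real (card ({..<n} \<inter> (dv -` {j. P (real j)}))) / real (card {..<n::nat})"
    using assms by (subst measure_pmf_of_set) (auto simp: lessThan_empty_iff)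
  also have "{..<n} \<inter> (dv -` {j. P (real j)}) = {i\<in>{..<n}. P (real (dv i))}" by auto
  finally show ?thesis by simp
qed

lemma part1:
  assumes pos: "\<And>i. i < n \<Longrightarrow> 1 \<le> dv i" and ev: "even (sum dv {..<n})" and n: "n \<ge> 1"
    and c: "0 < c" "c < 1"
  shows "prob_root_pr_gt c dv n k \<le> measure_pmf.prob (deg_law dv n) {j. real j > k}"
proof -
  let ?M = "matchings dv n"
  have M: "finite ?M" "?M \<noteq> {}" using matchings_ne[OF ev] by auto
  have I: "finite {..<n}" "{..<n} \<noteq> {}" using n by (auto simp: lessThan_empty_iff)
  have "prob_root_pr_gt c dv n k
      = (\<Sum>i<n. real (card {m\<in>?M. (m, i) \<in> {(m, i). pagerank c dv n m i > k}}) / real (card ?M)) / real n"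
    unfolding prob_root_pr_gt_def cm_root_def using pair_prob_formula[OF M I] by simp
  also have "\<dots> \<le> (\<Sum>i<n. if real (dv i) > k then 1 else 0) / real n"
  proof (intro divide_right_mono sum_mono)
    fix i assume i: "i \<in> {..<n}"
    show "real (card {m\<in>?M. (m, i) \<in> {(m, i). pagerank c dv n m i > k}}) / real (card ?M)
          \<le> (if real (dv i) > k then 1 else 0)"
    proof (cases "real (dv i) > k")
      case True
      have "card {m\<in>?M. (m, i) \<in> {(m, i). pagerank c dv n m i > k}} \<le> card ?M"
        using M by (intro card_mono) auto
      then show ?thesis using True M by (simp add: divide_le_eq_1 card_gt_0_iff)
    next
      case False
      have "pagerank c dv n m i \<le> real (dv i)" if "m \<in> ?M" for m
        using pagerank_bounds(2)[of m dv n i c] that pos i c by (auto simp: matchings_eq)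
      then have E: "{m\<in>?M. k < pagerank c dv n m i} = {}"
        using False by fastforce
      then show ?thesis using False by (simp add: E)
    qed
  qed simp
  also have "\<dots> = real (card {i\<in>{..<n}. real (dv i) > k}) / real n"
    using card_filter_sum[of "{..<n}" "\<lambda>i. real (dv i) > k"] by simp
  also have "\<dots> = measure_pmf.prob (deg_law dv n) {j. real j > k}"
    using deg_prob_formula[OF n, of dv "\<lambda>x. x > k"] by simp
  finally show ?thesis .
qed


lemma first_moment:
  assumes W: "finite W" and h: "h \<in> W"
  shows "(\<Sum>m\<in>matchW W. f (m h)) = real (dfact (card W - 2)) * (\<Sum>a\<in>W-{h}. (f a :: real))"
proof -
  have "(\<Sum>m\<in>matchW W. f (m h)) = (\<Sum>a\<in>W-{h}. \<Sum>m\<in>{m. m \<in> matchW W \<and> m h = a}. f (m h))"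
    by (rule sum.group[symmetric]) (use W h finite_matchW matchW_props in auto)
  also have "\<dots> = (\<Sum>a\<in>W-{h}. real (dfact (card W - 2)) * f a)"
  proof (rule sum.cong[OF refl])
    fix a assume a: "a \<in> W - {h}"
    have "(\<Sum>m\<in>{m. m \<in> matchW W \<and> m h = a}. f (m h)) = (\<Sum>m\<in>{m\<in>matchW W. m h = a}. f a)"
      by (rule sum.cong) auto
    also have "\<dots> = real (card {m\<in>matchW W. m h = a}) * f a" by simp
    also have "card {m\<in>matchW W. m h = a} = dfact (card W - 2)"
      using card_fiber1[OF W h, of a] a by auto
    finally show "(\<Sum>m\<in>{m. m \<in> matchW W \<and> m h = a}. f (m h)) = real (dfact (card W - 2)) * f a" .
  qed
  also have "\<dots> = real (dfact (card W - 2)) * (\<Sum>a\<in>W-{h}. f a)"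
    by (simp add: sum_distrib_left)
  finally show ?thesis .
qed

lemma pair_moment:
  assumes W: "finite W" and hh: "h \<in> W" "h' \<in> W" "h \<noteq> h'"
    and f0: "\<And>a. 0 \<le> f a" and f1: "\<And>a. f a \<le> (1::real)"
  shows "(\<Sum>m\<in>matchW W. f (m h) * f (m h'))
     \<le> real (dfact (card W - 2)) + real (dfact (card W - 4)) * (\<Sum>a\<in>W-{h}. f a) * (\<Sum>b\<in>W-{h'}. f b)"
proof -
  let ?M = "matchW W"
  let ?G2 = "real (dfact (card W - 2))" and ?G4 = "real (dfact (card W - 4))"
  let ?C = "\<lambda>p. card {m. m \<in> ?M \<and> (m h, m h') = p}"
  define U1 where "U1 p = (if p = (h', h) then ?G2 else 0)" for p
  define U2 where "U2 p = (if fst p \<in> W-{h,h'} \<and> snd p \<in> W-{h,h'} then ?G4 * (f (fst p) * f (snd p)) else 0)" for p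
  have "(\<Sum>m\<in>?M. f (m h) * f (m h')) = (\<Sum>p\<in>W\<times>W. \<Sum>m\<in>{m. m \<in> ?M \<and> (m h, m h') = p}. f (m h) * f (m h'))"
    by (rule sum.group[symmetric]) (use W hh finite_matchW matchW_props in auto)
  also have "\<dots> = (\<Sum>p\<in>W\<times>W. real (?C p) * (f (fst p) * f (snd p)))"
  proof (rule sum.cong[OF refl])
    fix p assume "p \<in> W \<times> W"
    have "(\<Sum>m\<in>{m. m \<in> ?M \<and> (m h, m h') = p}. f (m h) * f (m h'))
        = (\<Sum>m\<in>{m. m \<in> ?M \<and> (m h, m h') = p}. f (fst p) * f (snd p))"
      by (rule sum.cong) auto
    then show "(\<Sum>m\<in>{m. m \<in> ?M \<and> (m h, m h') = p}. f (m h) * f (m h')) = real (?C p) * (f (fst p) * f (snd p))"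
      by simp
  qed
  also have "\<dots> \<le> (\<Sum>p\<in>W\<times>W. U1 p + U2 p)"
  proof (rule sum_mono)
    fix p assume p: "p \<in> W \<times> W"
    obtain a b where ab: "p = (a, b)" by (cases p)
    have U1nn: "0 \<le> U1 p" and U2nn: "0 \<le> U2 p" unfolding U1_def U2_def using f0 by auto
    show "real (?C p) * (f (fst p) * f (snd p)) \<le> U1 p + U2 p"
    proof (cases "a = h' \<and> b = h")
      case True
      have "?C p \<le> card {m\<in>?M. m h = h'}"
        by (rule card_mono) (use finite_matchW[OF W] ab True in auto)
      also have "\<dots> = dfact (card W - 2)" using card_fiber1[OF W hh(1,2,3)] .
      finally have c: "real (?C p) \<le> ?G2" by simp
      have ff: "f (fst p) * f (snd p) \<le> 1" using f0 f1 by (simp add: mult_le_one)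
      have "real (?C p) * (f (fst p) * f (snd p)) \<le> ?G2 * 1"
        by (rule mult_mono[OF c ff]) (use f0 in auto)
      then show ?thesis using True ab U2nn unfolding U1_def by simp
    next
      case False
      show ?thesis
      proof (cases "a \<in> W-{h,h'} \<and> b \<in> W-{h,h'} \<and> a \<noteq> b")
        case True
        have "{m. m \<in> ?M \<and> (m h, m h') = p} = {m\<in>?M. m h = a \<and> m h' = b}" using ab by auto
        then have "?C p = dfact (card W - 4)"
          using card_fiber2[OF W hh(1) _ hh(2), of a b] True hh by auto
        then show ?thesis using True ab U1nn unfolding U2_def U1_def by auto
      next
        case False2: False
        have "{m. m \<in> ?M \<and> (m h, m h') = p} = {}"
        proof (rule ccontr)
          assume "{m. m \<in> ?M \<and> (m h, m h') = p} \<noteq> {}"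
          then obtain m where m: "m \<in> ?M" "m h = a" "m h' = b" using ab by auto
          note mp = matchW_props[OF m(1)]
          have aW: "a \<in> W" "a \<noteq> h" using mp(2,3)[of h] hh m by auto
          have bW: "b \<in> W" "b \<noteq> h'" using mp(2,3)[of h'] hh m by auto
          show False
          proof (cases "a = h'")
            case True
            then have "b = h" using m mp(4)[of h] by simp
            then show False using True False by simp
          next
            case ah': False
            have bh: "b \<noteq> h" using m mp(4)[of h'] ah' by auto
            have "a \<noteq> b" using m mp(4)[of h] mp(4)[of h'] hh(3) by metis
            then show False using False2 aW bW ah' bh by auto
          qed
        qed
        then have C0: "?C p = 0" by (simp only: card.empty)
        show ?thesis using U1nn U2nn by (simp add: C0)
      qed
    qed
  qed
  also have "\<dots> = (\<Sum>p\<in>W\<times>W. U1 p) + (\<Sum>p\<in>W\<times>W. U2 p)" by (rule sum.distrib)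
  also have "(\<Sum>p\<in>W\<times>W. U1 p) = ?G2" unfolding U1_def using hh W by (simp add: sum.delta')
  also have "(\<Sum>p\<in>W\<times>W. U2 p) = (\<Sum>p\<in>(W-{h,h'})\<times>(W-{h,h'}). ?G4 * (f (fst p) * f (snd p)))"
    unfolding U2_def by (rule sum.mono_neutral_cong_right) (use W in auto)
  also have "\<dots> = ?G4 * ((\<Sum>a\<in>W-{h,h'}. f a) * (\<Sum>b\<in>W-{h,h'}. f b))"
  proof -
    have "(\<Sum>a\<in>W-{h,h'}. f a) * (\<Sum>b\<in>W-{h,h'}. f b) = (\<Sum>p\<in>(W-{h,h'})\<times>(W-{h,h'}). f (fst p) * f (snd p))"
      unfolding sum_product sum.cartesian_product by (simp add: split_def)
    then show ?thesis by (simp add: sum_distrib_left)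
  qed
  also have "\<dots> \<le> ?G4 * ((\<Sum>a\<in>W-{h}. f a) * (\<Sum>b\<in>W-{h'}. f b))"
  proof (intro mult_left_mono mult_mono)
    show "(\<Sum>a\<in>W-{h,h'}. f a) \<le> (\<Sum>a\<in>W-{h}. f a)" by (rule sum_mono2) (use W f0 in auto)
    show "(\<Sum>a\<in>W-{h,h'}. f a) \<le> (\<Sum>a\<in>W-{h'}. f a)" by (rule sum_mono2) (use W f0 in auto)
  qed (use f0 in \<open>auto intro: sum_nonneg\<close>)
  finally show ?thesis by (simp add: mult.assoc)
qed


lemma dfact_rec: "k \<ge> 2 \<Longrightarrow> dfact k = (k - 1) * dfact (k - 2)"
proof -
  assume "k \<ge> 2"
  then obtain j where "k = Suc (Suc j)" by (metis add_2_eq_Suc le_Suc_ex)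
  then show ?thesis by simp
qed

lemma arith1:
  fixes G \<mu> h a b :: real
  assumes a: "a \<noteq> 0" and b: "b \<noteq> 0" and ab: "a = b + 2"
  shows "G / a * (a * \<mu>) + h * (G / a) + G / (a * b) * (a * \<mu>)^2 - 2 * \<mu> * (G / a * (a * \<mu>)) + G * \<mu>^2
       = G * (\<mu> + h / a + 2 * \<mu>^2 / b)"
proof -
  have e1: "G / a * (a * \<mu>) = G * \<mu>" using a by simp
  have e2: "G / (a * b) * (a * \<mu>)^2 = G * \<mu>^2 * a / b" using a b by (simp add: power2_eq_square)
  have e3: "G * \<mu>^2 * a / b = G * \<mu>^2 + 2 * G * \<mu>^2 / b" using b ab by (simp add: field_simps power2_eq_square)
  show ?thesis unfolding e1 e2 e3 by (simp add: algebra_simps power2_eq_square)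
qed

lemma arith2:
  fixes \<mu> h a b :: real
  assumes a: "a \<noteq> 0" and b: "b \<noteq> 0" and m: "\<mu> \<noteq> 0"
  shows "(\<mu> + h / a + 2 * \<mu>^2 / b) / (\<mu>/2)^2 = 4/\<mu> + 4 * h / (a * \<mu>^2) + 8 / b"
  using a b m by (simp add: field_simps power2_eq_square)
lemma arith3:
  fixes B G Q \<mu> :: real
  assumes "B * (\<mu>/2)^2 \<le> G * Q" "G > 0" "\<mu> > 0"
  shows "B / G \<le> Q / (\<mu>/2)^2"
proof -
  have p: "(\<mu>/2)^2 > 0" using assms by simp
  have "B / G * (\<mu>/2)^2 \<le> Q" using assms(1,2) by (simp add: field_simps)
  then show ?thesis using p by (simp add: le_divide_eq)
qed
lemma cheb_match:
  fixes f :: "nat \<Rightarrow> real"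
  assumes W: "finite W" and H: "H \<subseteq> W" and f0: "\<And>a. 0 \<le> f a" and f1: "\<And>a. f a \<le> 1"
    and L4: "card W \<ge> 4" and ev: "even (card W)"
    and mu: "\<mu> = (\<Sum>h\<in>H. \<Sum>a\<in>W-{h}. f a) / (real (card W) - 1)" and mupos: "\<mu> > 0"
  shows "real (card {m\<in>matchW W. (\<Sum>h\<in>H. f (m h)) \<le> \<mu>/2}) / real (card (matchW W))
     \<le> 4/\<mu> + 4 * real (card H)^2 / ((real (card W) - 1) * \<mu>^2) + 8 / (real (card W) - 3)"
proof -
  define L where "L = card W"
  define M where "M = matchW W"
  define G where "G = real (dfact L)"
  define G2 where "G2 = real (dfact (L - 2))"
  define G4 where "G4 = real (dfact (L - 4))"
  define X where "X m = (\<Sum>h\<in>H. f (m h))" for m :: "nat \<Rightarrow> nat"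
  define S where "S h = (\<Sum>a\<in>W-{h}. f a)" for h
  define T1 where "T1 = (\<Sum>h\<in>H. S h)"
  have finH: "finite H" using H W finite_subset by blast
  have finM: "finite M" unfolding M_def using finite_matchW[OF W] .
  have Lr: "real L \<ge> 4" using L4 unfolding L_def by simp
  have cardM: "real (card M) = G" unfolding M_def G_def L_def using card_matchW[OF W] by simp
  have GG2: "G = (real L - 1) * G2"
    unfolding G_def G2_def using dfact_rec[of L] L4 unfolding L_def by (simp add: of_nat_diff)
  have G2G4: "G2 = (real L - 3) * G4"
  proof -
    have "dfact (L - 2) = (L - 2 - 1) * dfact (L - 2 - 2)" using dfact_rec[of "L - 2"] L4 unfolding L_def by simp
    then show ?thesis unfolding G2_def G4_def using L4 unfolding L_def by (simp add: of_nat_diff)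
  qed
  have G4pos: "G4 > 0"
  proof -
    have "2 dvd (L - 4)" using ev unfolding L_def by (intro dvd_diff_nat) auto
    then obtain k where "L - 4 = 2 * k" by (elim evenE)
    then show ?thesis unfolding G4_def using dfact_even_pos[of k] by simp
  qed
  have G2pos: "G2 > 0" unfolding G2G4 using G4pos Lr by (intro mult_pos_pos) auto
  have Gpos: "G > 0" unfolding GG2 using G2pos Lr by (intro mult_pos_pos) auto
  have T1mu: "T1 = (real L - 1) * \<mu>" unfolding T1_def S_def mu L_def using L4 by simp
  have Snn: "0 \<le> S h" for h unfolding S_def using f0 by (simp add: sum_nonneg)
  have SX: "(\<Sum>m\<in>M. X m) = G2 * T1"
  proof -
    have "(\<Sum>m\<in>M. X m) = (\<Sum>h\<in>H. \<Sum>m\<in>M. f (m h))" unfolding X_def by (rule sum.swap)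
    also have "\<dots> = (\<Sum>h\<in>H. G2 * S h)"
      using first_moment[OF W] H unfolding M_def G2_def S_def L_def by (intro sum.cong) auto
    finally show ?thesis unfolding T1_def by (simp add: sum_distrib_left)
  qed
  have SX2: "(\<Sum>m\<in>M. (X m)^2) \<le> G2 * T1 + real (card H)^2 * G2 + G4 * T1^2"
  proof -
    have "(\<Sum>m\<in>M. (X m)^2) = (\<Sum>m\<in>M. \<Sum>h\<in>H. \<Sum>h'\<in>H. f (m h) * f (m h'))"
      unfolding X_def by (simp add: power2_eq_square sum_product)
    also have "\<dots> = (\<Sum>h\<in>H. \<Sum>m\<in>M. \<Sum>h'\<in>H. f (m h) * f (m h'))" by (rule sum.swap)
    also have "\<dots> = (\<Sum>h\<in>H. \<Sum>h'\<in>H. \<Sum>m\<in>M. f (m h) * f (m h'))"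
      by (intro sum.cong refl sum.swap)
    also have "\<dots> \<le> (\<Sum>h\<in>H. G2 * S h + (real (card H) * G2 + G4 * S h * T1))"
    proof (rule sum_mono)
      fix h assume h: "h \<in> H"
      have hW: "h \<in> W" using h H by auto
      have "(\<Sum>h'\<in>H. \<Sum>m\<in>M. f (m h) * f (m h'))
          = (\<Sum>m\<in>M. f (m h) * f (m h)) + (\<Sum>h'\<in>H-{h}. \<Sum>m\<in>M. f (m h) * f (m h'))"
        using h finH by (simp add: sum.remove)
      also have "(\<Sum>m\<in>M. f (m h) * f (m h)) \<le> (\<Sum>m\<in>M. f (m h))"
        by (intro sum_mono) (rule mult_left_le[OF f1 f0])
      also have "(\<Sum>m\<in>M. f (m h)) = G2 * S h"
        using first_moment[OF W hW] unfolding M_def G2_def S_def L_def by simp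
      also have "(\<Sum>h'\<in>H-{h}. \<Sum>m\<in>M. f (m h) * f (m h')) \<le> (\<Sum>h'\<in>H-{h}. G2 + G4 * S h * S h')"
      proof (rule sum_mono)
        fix h' assume h': "h' \<in> H - {h}"
        then have "h' \<in> W" "h \<noteq> h'" using H by auto
        then show "(\<Sum>m\<in>M. f (m h) * f (m h')) \<le> G2 + G4 * S h * S h'"
          using pair_moment[OF W hW _ _ f0 f1, of h'] unfolding M_def G2_def G4_def S_def L_def
          by simp
      qed
      also have "\<dots> \<le> (\<Sum>h'\<in>H. G2 + G4 * S h * S h')"
        by (rule sum_mono2) (use finH G4pos Snn G2pos in \<open>auto intro!: add_nonneg_nonneg mult_nonneg_nonneg\<close>)
      also have "\<dots> = real (card H) * G2 + G4 * S h * T1"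
        unfolding T1_def by (simp add: sum.distrib sum_distrib_left)
      finally show "(\<Sum>h'\<in>H. \<Sum>m\<in>M. f (m h) * f (m h')) \<le> G2 * S h + (real (card H) * G2 + G4 * S h * T1)"
        by simp
    qed
    also have "\<dots> = G2 * T1 + real (card H)^2 * G2 + G4 * T1^2"
    proof -
      have a: "(\<Sum>h\<in>H. G2 * S h) = G2 * T1" unfolding T1_def by (rule sum_distrib_left[symmetric])
      have b: "(\<Sum>h\<in>H. G4 * S h * T1) = G4 * T1 * T1" unfolding T1_def
        by (simp only: sum_distrib_right[symmetric] sum_distrib_left[symmetric])
      have c: "(\<Sum>h\<in>H. real (card H) * G2) = real (card H)^2 * G2" by (simp add: power2_eq_square)
      show ?thesis by (simp only: sum.distrib a b c) (simp add: power2_eq_square)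
    qed
    finally show ?thesis .
  qed
  define B where "B = {m\<in>M. X m \<le> \<mu>/2}"
  have "real (card B) * (\<mu>/2)^2 = (\<Sum>m\<in>B. (\<mu>/2)^2)" by simp
  also have "\<dots> \<le> (\<Sum>m\<in>B. (X m - \<mu>)^2)"
  proof (rule sum_mono)
    fix m assume "m \<in> B"
    then have "X m \<le> \<mu>/2" unfolding B_def by simp
    moreover have "0 \<le> \<mu>/2" using mupos by simp
    ultimately have "\<mu>/2 \<le> \<bar>X m - \<mu>\<bar>" by simp
    then show "(\<mu>/2)^2 \<le> (X m - \<mu>)^2"
      by (metis abs_le_square_iff abs_of_nonneg \<open>0 \<le> \<mu>/2\<close>)
  qed
  also have "\<dots> \<le> (\<Sum>m\<in>M. (X m - \<mu>)^2)"
    by (rule sum_mono2[OF finM]) (auto simp: B_def)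
  also have "\<dots> = (\<Sum>m\<in>M. (X m)^2 - (2 * \<mu>) * X m + \<mu>^2)"
    by (intro sum.cong) (auto simp: power2_diff mult_ac)
  also have "\<dots> = (\<Sum>m\<in>M. (X m)^2) - 2 * \<mu> * (\<Sum>m\<in>M. X m) + G * \<mu>^2"
    by (simp only: sum.distrib sum_subtractf sum_distrib_left[symmetric] sum_constant cardM[symmetric])
  also have "\<dots> \<le> G2 * T1 + real (card H)^2 * G2 + G4 * T1^2 - 2 * \<mu> * (G2 * T1) + G * \<mu>^2"
    using SX2 SX by simp
  also have "\<dots> = G * (\<mu> + real (card H)^2 / (real L - 1) + 2 * \<mu>^2 / (real L - 3))"
  proof -
    have G2e: "G2 = G / (real L - 1)" using GG2 Lr by simp
    have d: "(real L - 1) * (real L - 3) > 0" using Lr by (intro mult_pos_pos) auto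
    have "G = ((real L - 1) * (real L - 3)) * G4" unfolding GG2 G2G4 by (simp add: mult.assoc)
    then have G4e: "G4 = G / ((real L - 1) * (real L - 3))" using d Lr by (simp add: eq_divide_eq)
    have n1: "real L - 1 \<noteq> 0" and n3: "real L - 3 \<noteq> 0" using Lr by auto
    show ?thesis unfolding G2e G4e T1mu by (rule arith1) (use Lr in auto)
  qed
  finally have main: "real (card B) * (\<mu>/2)^2 \<le> G * (\<mu> + real (card H)^2 / (real L - 1) + 2 * \<mu>^2 / (real L - 3))" .
  have "real (card B) / G \<le> (\<mu> + real (card H)^2 / (real L - 1) + 2 * \<mu>^2 / (real L - 3)) / (\<mu>/2)^2"
    using main Gpos mupos by (rule arith3)
  also have "\<dots> = 4/\<mu> + 4 * real (card H)^2 / ((real L - 1) * \<mu>^2) + 8 / (real L - 3)"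
    by (rule arith2) (use Lr mupos in auto)
  finally show ?thesis unfolding B_def X_def M_def L_def using cardM unfolding M_def by simp
qed


lemma arith4:
  fixes d s p :: real
  assumes "d \<noteq> 0" "s \<noteq> 0" "p \<noteq> 0"
  shows "4 * d^2 / (s * (d * p / s)^2) = 4 * s / p^2"
  using assms by (simp add: field_simps power2_eq_square)

lemma vertex_bound:
  fixes dv :: "nat \<Rightarrow> nat"
  assumes pos: "\<And>i. i < n \<Longrightarrow> 1 \<le> dv i" and ev: "even (sum dv {..<n})"
    and n2: "n \<ge> 2" and S4: "sum dv {..<n} \<ge> 4" and v: "v < n" and c: "0 < c" "c < 1" and k: "k > 0"
    and hv: "real (dv v) > \<beta> * k"
    and hq: "\<beta> * (c * (1 - c)) * (real n - 1) \<ge> 2 * (real (sum dv {..<n}) - 1)"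
  shows "real (card {m\<in>matchings dv n. pagerank c dv n m v > k}) / real (card (matchings dv n))
     \<ge> 1 - (4 * (real (sum dv {..<n}) - 1) / (real (dv v) * (real n - 1))
            + 4 * (real (sum dv {..<n}) - 1) / (real n - 1)^2 + 8 / (real (sum dv {..<n}) - 3))"
proof -
  define S where "S = sum dv {..<n}"
  define W where "W = {..<S}"
  define M where "M = matchW W"
  define H where "H = half_edges dv v"
  define f where "f = fw dv n"
  define X where "X m = (\<Sum>h\<in>H. f (m h))" for m :: "nat \<Rightarrow> nat"
  define \<mu> where "\<mu> = (\<Sum>h\<in>H. \<Sum>a\<in>W-{h}. f a) / (real (card W) - 1)"
  define d where "d = real (dv v)"
  have Mdef: "matchings dv n = M" unfolding M_def W_def S_def by (rule matchings_eq)
  have cW: "card W = S" unfolding W_def by simp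
  have S4': "S \<ge> 4" unfolding S_def by (rule S4)
  then have Sr: "real S \<ge> 4" by simp
  have d1: "d \<ge> 1" unfolding d_def using pos[OF v] by simp
  have HW: "H \<subseteq> W" unfolding H_def W_def S_def by (rule half_edges_sub[OF v])
  have cH: "card H = dv v" unfolding H_def by (rule card_half_edges)
  have finM: "finite M" "M \<noteq> {}" using matchings_ne[OF ev] Mdef by auto
  have tot: "(\<Sum>a\<in>W. f a) = real n" unfolding W_def S_def f_def using fw_total[OF pos] by simp
  have Sh: "(\<Sum>a\<in>W-{h}. f a) = real n - 1 / d" if h: "h \<in> H" for h
  proof -
    have "(\<Sum>a\<in>W-{h}. f a) = (\<Sum>a\<in>W. f a) - f h"
      using h HW by (subst sum_diff1) (auto simp: W_def)
    also have "f h = 1 / d" unfolding f_def d_def using fw_in[OF v] h unfolding H_def by simp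
    finally show ?thesis using tot by simp
  qed
  have mu_eq: "\<mu> = d * (real n - 1 / d) / (real S - 1)"
    unfolding \<mu>_def cW using Sh cH d_def by simp
  define \<mu>0 where "\<mu>0 = d * (real n - 1) / (real S - 1)"
  have mu0pos: "\<mu>0 > 0" unfolding \<mu>0_def using d1 n2 Sr by (intro divide_pos_pos mult_pos_pos) auto
  have mu0le: "\<mu>0 \<le> \<mu>" unfolding mu_eq \<mu>0_def using d1 Sr
    by (intro divide_right_mono) (auto simp: algebra_simps)
  have mupos: "\<mu> > 0" using mu0pos mu0le by simp
  have good: "pagerank c dv n m v > k" if m: "m \<in> M" "X m > \<mu>/2" for m
  proof -
    have mW: "m \<in> matchW {..<sum dv {..<n}}" using m(1) unfolding M_def W_def S_def .
    have "(1 - c) * (1 + c * col_sum dv n m 1 v) \<le> pagerank c dv n m v"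
      by (rule pagerank_bounds(3)[OF mW pos v c])
    moreover have "col_sum dv n m 1 v = X m" unfolding X_def H_def f_def by (rule col_sum_1[OF mW v])
    moreover have "k < (1 - c) * (c * X m)"
    proof -
      have "\<beta> * k < d" using hv unfolding d_def by simp
      have "k * (2 * (real S - 1)) \<le> k * (\<beta> * (c * (1 - c)) * (real n - 1))"
        using hq k unfolding S_def by (intro mult_left_mono) auto
      also have "\<dots> = (c * (1 - c)) * (\<beta> * k) * (real n - 1)" by (simp add: mult_ac)
      also have "\<dots> < (c * (1 - c)) * d * (real n - 1)"
        using \<open>\<beta> * k < d\<close> c n2 by (intro mult_strict_right_mono mult_strict_left_mono) auto
      finally have "k * (2 * (real S - 1)) < (c * (1 - c)) * d * (real n - 1)" .
      then have "k < (c * (1 - c)) * (\<mu>0 / 2)"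
        unfolding \<mu>0_def using Sr by (simp add: field_simps)
      also have "\<dots> \<le> (c * (1 - c)) * (\<mu> / 2)"
        using mu0le c by (intro mult_left_mono) auto
      also have "\<dots> \<le> (c * (1 - c)) * X m"
        using m(2) c by (intro mult_left_mono) auto
      finally show ?thesis by (simp add: mult_ac)
    qed
    ultimately show ?thesis using c by (smt (verit) mult_left_mono)
  qed
  have sub: "M - {m\<in>M. X m \<le> \<mu>/2} \<subseteq> {m\<in>M. pagerank c dv n m v > k}"
    using good by force
  have "real (card M) - real (card {m\<in>M. X m \<le> \<mu>/2}) \<le> real (card {m\<in>M. pagerank c dv n m v > k})"
  proof -
    have "card (M - {m\<in>M. X m \<le> \<mu>/2}) \<le> card {m\<in>M. pagerank c dv n m v > k}"
      by (rule card_mono) (use finM sub in auto)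
    moreover have "card (M - {m\<in>M. X m \<le> \<mu>/2}) = card M - card {m\<in>M. X m \<le> \<mu>/2}"
      by (rule card_Diff_subset) (use finM in auto)
    moreover have "card {m\<in>M. X m \<le> \<mu>/2} \<le> card M" by (rule card_mono) (use finM in auto)
    ultimately show ?thesis by linarith
  qed
  then have ratio: "1 - real (card {m\<in>M. X m \<le> \<mu>/2}) / real (card M)
       \<le> real (card {m\<in>M. pagerank c dv n m v > k}) / real (card M)"
  proof -
    have a: "real (card M) > 0" using finM by (simp add: card_gt_0_iff)
    have "1 - real (card {m\<in>M. X m \<le> \<mu>/2}) / real (card M)
        = (real (card M) - real (card {m\<in>M. X m \<le> \<mu>/2})) / real (card M)"
      using a by (simp add: diff_divide_distrib)
    also have "\<dots> \<le> real (card {m\<in>M. pagerank c dv n m v > k}) / real (card M)"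
      using \<open>real (card M) - real (card {m\<in>M. X m \<le> \<mu>/2}) \<le> real (card {m\<in>M. pagerank c dv n m v > k})\<close> a
      by (intro divide_right_mono) auto
    finally show ?thesis .
  qed
  have f0: "\<And>a. 0 \<le> f a" unfolding f_def by (rule fw_nonneg)
  have f1: "\<And>a. f a \<le> 1" unfolding f_def by (rule fw_le1)
  have cheb: "real (card {m\<in>M. X m \<le> \<mu>/2}) / real (card M)
     \<le> 4/\<mu> + 4 * real (card H)^2 / ((real (card W) - 1) * \<mu>^2) + 8 / (real (card W) - 3)"
    unfolding M_def X_def
    by (rule cheb_match[OF _ HW f0 f1 _ _ \<mu>_def mupos])
       (use S4 ev in \<open>auto simp: W_def S_def\<close>)
  have t1: "4/\<mu> \<le> 4 * (real S - 1) / (d * (real n - 1))"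
  proof -
    have "4/\<mu> \<le> 4/\<mu>0" using mu0pos mu0le by (intro divide_left_mono) auto
    also have "\<dots> = 4 * (real S - 1) / (d * (real n - 1))" unfolding \<mu>0_def by simp
    finally show ?thesis .
  qed
  have t2: "4 * real (card H)^2 / ((real (card W) - 1) * \<mu>^2) \<le> 4 * (real S - 1) / (real n - 1)^2"
  proof -
    have "4 * real (card H)^2 / ((real (card W) - 1) * \<mu>^2) \<le> 4 * d^2 / ((real S - 1) * \<mu>0^2)"
      unfolding cH cW d_def[symmetric] using mu0pos mu0le Sr
      by (intro divide_left_mono mult_left_mono power_mono mult_pos_pos) auto
    also have "\<dots> = 4 * (real S - 1) / (real n - 1)^2"
      unfolding \<mu>0_def by (rule arith4) (use d1 Sr n2 in auto)
    finally show ?thesis .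
  qed
  show ?thesis
    using ratio cheb t1 t2 unfolding Mdef cW S_def d_def by linarith
qed


lemma deg_expect:
  assumes "n \<ge> 1"
  shows "measure_pmf.expectation (deg_law dv n) real = real (sum dv {..<n}) / real n"
proof -
  have ne: "{..<n} \<noteq> {}" using assms by (auto simp: lessThan_empty_iff)
  have "measure_pmf.expectation (deg_law dv n) real = measure_pmf.expectation (pmf_of_set {..<n}) (\<lambda>i. real (dv i))"
    unfolding deg_law_def by simp
  also have "\<dots> = (\<Sum>i<n. real (dv i)) / real (card {..<n})"
    by (rule integral_pmf_of_set[OF ne]) simp
  finally show ?thesis by simp
qed

lemma part2:
  fixes d :: "nat \<Rightarrow> nat \<Rightarrow> nat" and c \<beta> \<epsilon> \<mu>D :: real
  assumes deg_pos: "\<And>n i. i < n \<Longrightarrow> 1 \<le> d n i"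
    and deg_even: "\<And>n. even (\<Sum>i<n. d n i)"
    and conv_mean: "(\<lambda>n. measure_pmf.expectation (deg_law (d n) n) real) \<longlonglongrightarrow> \<mu>D"
    and c: "0 < c" "c < 1"
    and beta: "\<beta> > 4 * \<mu>D / (c * (1 - c))" and eps: "\<epsilon> > 0"
  shows "\<forall>\<^sub>F k in at_top. \<forall>\<^sub>F n in sequentially.
             prob_root_pr_gt c (d n) n k
               \<ge> (1 - \<epsilon>) * measure_pmf.prob (deg_law (d n) n) {j. real j > \<beta> * k}"
proof -
  define E where "E n = measure_pmf.expectation (deg_law (d n) n) real" for n
  define S where "S n = sum (d n) {..<n}" for n
  have E_eq: "E n = real (S n) / real n" if "n \<ge> 1" for n
    unfolding E_def S_def using deg_expect[OF that] .
  have Sge: "S n \<ge> n" for n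
  proof -
    have "(\<Sum>i<n. (1::nat)) \<le> S n" unfolding S_def by (rule sum_mono) (use deg_pos in auto)
    then show ?thesis by simp
  qed
  have E1: "E n \<ge> 1" if "n \<ge> 1" for n
  proof -
    have "real n \<le> real (S n)" using Sge[of n] by simp
    moreover have "real n > 0" using that by simp
    ultimately show ?thesis unfolding E_eq[OF that] by (simp add: le_divide_eq)
  qed
  have mu1: "\<mu>D \<ge> 1"
    by (rule LIMSEQ_le_const[OF conv_mean[folded E_def]]) (use E1 in auto)
  have cc: "c * (1 - c) > 0" using c by simp
  have betapos: "\<beta> > 0" using beta mu1 cc
    by (metis divide_pos_pos dual_order.strict_trans mult_pos_pos zero_less_numeral less_le_trans zero_less_one)
  define \<kappa> where "\<kappa> = \<beta> * (c * (1 - c)) / 2"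
  have kappa: "\<kappa> > 2 * \<mu>D" using beta cc unfolding \<kappa>_def by (simp add: field_simps)
  define \<theta> where "\<theta> = (\<mu>D + \<kappa>) / 2"
  have th: "\<mu>D < \<theta>" "\<theta> < \<kappa>" "\<theta> > 0" using kappa mu1 unfolding \<theta>_def by auto
  define r where "r n = (real (S n) - 1) / (real n - 1)" for n
  have r_lim: "r \<longlonglongrightarrow> \<mu>D"
  proof -
    have a: "(\<lambda>n. real n / (real n - 1)) \<longlonglongrightarrow> 1" by real_asymp
    have b: "(\<lambda>n. 1 / (real n - 1)) \<longlonglongrightarrow> 0" by real_asymp
    have "(\<lambda>n. E n * (real n / (real n - 1)) - 1 / (real n - 1)) \<longlonglongrightarrow> \<mu>D * 1 - 0"
      by (intro tendsto_intros a b conv_mean[folded E_def])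
    moreover have "\<forall>\<^sub>F n in sequentially. E n * (real n / (real n - 1)) - 1 / (real n - 1) = r n"
      using eventually_ge_at_top[of "2::nat"]
    proof eventually_elim
      case (elim n)
      then have nz: "real n \<noteq> 0" by auto
      have e: "E n * real n = real (S n)" using E_eq[of n] elim nz by simp
      have "E n * (real n / (real n - 1)) - 1 / (real n - 1) = (E n * real n - 1) / (real n - 1)"
        by (simp add: diff_divide_distrib)
      then show ?case unfolding r_def e .
    qed
    ultimately show ?thesis by (simp add: tendsto_cong)
  qed
  have ev_r: "\<forall>\<^sub>F n in sequentially. r n < \<theta>" using order_tendstoD(2)[OF r_lim th(1)] .
  have lim0: "(\<lambda>n. 4 * \<theta> / (real n - 1) + 8 / (real n - 3)) \<longlonglongrightarrow> 0" using th(3) by real_asymp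
  have ev_small: "\<forall>\<^sub>F n in sequentially. 4 * \<theta> / (real n - 1) + 8 / (real n - 3) < 2 * \<epsilon> / 3"
    using order_tendstoD(2)[OF lim0, of "2 * \<epsilon> / 3"] eps by simp
  define K where "K = max 1 (12 * \<theta> / (\<beta> * \<epsilon>))"
  show ?thesis
    using eventually_ge_at_top[of K]
  proof eventually_elim
    case (elim k)
    have k: "k \<ge> 1" "k \<ge> 12 * \<theta> / (\<beta> * \<epsilon>)" using elim unfolding K_def by auto
    have kpos: "k > 0" using k by simp
    have t1: "4 * \<theta> / (\<beta> * k) \<le> \<epsilon> / 3"
    proof -
      have "12 * \<theta> \<le> k * (\<beta> * \<epsilon>)" using k(2) betapos eps by (simp add: divide_le_eq mult.commute)
      then show ?thesis using betapos kpos eps by (simp add: divide_le_eq field_simps)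
    qed
    show ?case
      using ev_r ev_small eventually_ge_at_top[of "4::nat"]
    proof eventually_elim
      case (elim n)
      have n4: "n \<ge> 4" and rn: "r n < \<theta>" and sm: "4 * \<theta> / (real n - 1) + 8 / (real n - 3) < 2 * \<epsilon> / 3"
        using elim by auto
      have n1: "n \<ge> 1" using n4 by simp
      have S4: "S n \<ge> 4" using Sge[of n] n4 by simp
      have Sn: "real (S n) \<ge> real n" using Sge[of n] by simp
      have rpos: "r n > 0" unfolding r_def using S4 n4 by (intro divide_pos_pos) auto
      let ?M = "matchings (d n) n"
      have M: "finite ?M" "?M \<noteq> {}" using matchings_ne[OF deg_even[of n]] by auto
      have I: "finite {..<n}" "{..<n} \<noteq> {}" using n1 by (auto simp: lessThan_empty_iff)
      define q where "q v = real (card {m\<in>?M. pagerank c (d n) n m v > k}) / real (card ?M)" for v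
      have q_nn: "q v \<ge> 0" for v unfolding q_def by simp
      have q_big: "q v \<ge> 1 - \<epsilon>" if v: "v < n" "real (d n v) > \<beta> * k" for v
      proof -
        have hq: "\<beta> * (c * (1 - c)) * (real n - 1) \<ge> 2 * (real (S n) - 1)"
        proof -
          have "2 * (real (S n) - 1) = 2 * r n * (real n - 1)" unfolding r_def using n4 by simp
          also have "\<dots> \<le> 2 * \<kappa> * (real n - 1)" using rn th(2) n4 by (intro mult_right_mono) auto
          finally show ?thesis unfolding \<kappa>_def by simp
        qed
        have n2: "n \<ge> 2" using n4 by simp
        note vb = vertex_bound[OF deg_pos[where n=n] deg_even[of n] n2 S4[unfolded S_def] v(1) c kpos v(2) hq[unfolded S_def]]
        have b1: "4 * (real (S n) - 1) / (real (d n v) * (real n - 1)) \<le> \<epsilon> / 3"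
        proof -
          have "4 * (real (S n) - 1) / (real (d n v) * (real n - 1)) = 4 * r n / real (d n v)"
            unfolding r_def by (simp add: field_simps)
          also have "\<dots> \<le> 4 * \<theta> / (\<beta> * k)"
            using rn rpos v(2) betapos kpos by (intro frac_le mult_pos_pos) auto
          finally show ?thesis using t1 by linarith
        qed
        have b2: "4 * (real (S n) - 1) / (real n - 1)^2 \<le> 4 * \<theta> / (real n - 1)"
        proof -
          have "4 * (real (S n) - 1) / (real n - 1)^2 = 4 * r n / (real n - 1)"
            unfolding r_def using n4 by (simp add: field_simps power2_eq_square)
          also have "\<dots> \<le> 4 * \<theta> / (real n - 1)" using rn n4 by (intro divide_right_mono) auto
          finally show ?thesis .
        qed
        have b3: "8 / (real (S n) - 3) \<le> 8 / (real n - 3)"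
          using Sn n4 by (intro divide_left_mono) auto
        have "1 - \<epsilon> \<le> 1 - (4 * (real (S n) - 1) / (real (d n v) * (real n - 1))
            + 4 * (real (S n) - 1) / (real n - 1)^2 + 8 / (real (S n) - 3))"
          using b1 b2 b3 sm by linarith
        also have "\<dots> \<le> q v" using vb n4 unfolding q_def S_def by simp
        finally show ?thesis .
      qed
      have "prob_root_pr_gt c (d n) n k = (\<Sum>v<n. q v) / real n"
        unfolding prob_root_pr_gt_def cm_root_def q_def using pair_prob_formula[OF M I] by simp
      also have "\<dots> \<ge> (\<Sum>v<n. if real (d n v) > \<beta> * k then 1 - \<epsilon> else 0) / real n"
        using q_big q_nn eps by (intro divide_right_mono sum_mono) auto
      finally have "prob_root_pr_gt c (d n) n k \<ge> (\<Sum>v<n. if real (d n v) > \<beta> * k then 1 - \<epsilon> else 0) / real n" .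
      moreover have "(\<Sum>v<n. if real (d n v) > \<beta> * k then 1 - \<epsilon> else 0) / real n
          = (1 - \<epsilon>) * measure_pmf.prob (deg_law (d n) n) {j. real j > \<beta> * k}"
      proof -
        have "(\<Sum>v<n. if real (d n v) > \<beta> * k then 1 - \<epsilon> else 0) = (1 - \<epsilon>) * real (card {v\<in>{..<n}. real (d n v) > \<beta> * k})"
          using card_filter_sum[of "{..<n}" "\<lambda>v. real (d n v) > \<beta> * k"]
          by (simp add: sum_distrib_left if_distrib cong: if_cong)
        then show ?thesis using deg_prob_formula[OF n1, of "d n" "\<lambda>x. x > \<beta> * k"] by simp
      qed
      ultimately show ?case by simp
    qed
  qed
qed


lemma ubp_prob_space: "prob_space (ubp_tree p)"
  unfolding ubp_tree_def by (rule prob_space_PiM) (simp add: prob_space_measure_pmf)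

lemma coord_meas[measurable]: "(\<lambda>N. N v) \<in> ubp_tree p \<rightarrow>\<^sub>M count_space UNIV"
proof -
  have "(\<lambda>N. N v) \<in> ubp_tree p \<rightarrow>\<^sub>M measure_pmf (if v = [] then p else size_biased p)"
    unfolding ubp_tree_def by (rule measurable_component_singleton) simp
  moreover have "measurable (ubp_tree p) (measure_pmf (if v = [] then p else size_biased p))
      = measurable (ubp_tree p) (count_space UNIV)"
    by (rule measurable_cong_sets) auto
  ultimately show ?thesis by simp
qed

lemma nat_fun_meas: "(\<lambda>N. g (N v)) \<in> borel_measurable (ubp_tree p)"
  by (rule measurable_compose[OF coord_meas]) simp

lemma tree_col_sum_meas: "(\<lambda>N. tree_col_sum N s v) \<in> borel_measurable (ubp_tree p)"
proof (induction s arbitrary: v)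
  case 0 then show ?case by simp
next
  case (Suc s)
  have deg: "(\<lambda>N. real (tree_deg N w)) \<in> borel_measurable (ubp_tree p)" for w
    unfolding tree_deg_def using nat_fun_meas[of "\<lambda>j. real (j + (if w = [] then 0 else 1))" w p] by simp
  have g: "(\<lambda>N. tree_col_sum N s w / real (tree_deg N w)) \<in> borel_measurable (ubp_tree p)" for w
    using Suc.IH[of w] deg[of w] by (rule borel_measurable_divide)
  have F: "(\<lambda>N. \<Sum>i<j. tree_col_sum N s (v @ [i]) / real (tree_deg N (v @ [i]))) \<in> borel_measurable (ubp_tree p)" for j
    using g by (intro borel_measurable_sum) auto
  have S: "(\<lambda>N. \<Sum>i<N v. tree_col_sum N s (v @ [i]) / real (tree_deg N (v @ [i]))) \<in> borel_measurable (ubp_tree p)"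
    using measurable_compose_countable[OF F coord_meas] .
  have P: "(\<lambda>N. if v = [] then 0 else tree_col_sum N s (butlast v) / real (tree_deg N (butlast v))) \<in> borel_measurable (ubp_tree p)"
    using g by simp
  show ?case unfolding tree_col_sum.simps using S P by (rule borel_measurable_add)
qed

lemma tree_root_pr_meas: "(\<lambda>N. tree_root_pr c N) \<in> borel_measurable (ubp_tree p)"
proof -
  have "(\<lambda>N. ennreal ((1 - c) * c ^ s * tree_col_sum N s [])) \<in> borel_measurable (ubp_tree p)" for s
    using tree_col_sum_meas[of s "[]" p] by measurable
  then show ?thesis unfolding tree_root_pr_def by (rule borel_measurable_suminf_order)
qed

lemma tree_event_sets: "{N \<in> space (ubp_tree p). tree_root_pr c N > ennreal k} \<in> sets (ubp_tree p)"
  using tree_root_pr_meas[of c p] by measurable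


lemma tree_col_sum_bound:
  "0 \<le> tree_col_sum N s v \<and> tree_col_sum N s v \<le> max 1 (real (tree_deg N v))"
proof (induction s arbitrary: v)
  case 0 then show ?case by simp
next
  case (Suc s)
  have tm: "0 \<le> tree_col_sum N s w / real (tree_deg N w) \<and> tree_col_sum N s w / real (tree_deg N w) \<le> 1" for w
  proof (cases "tree_deg N w = 0")
    case True then show ?thesis by simp
  next
    case False
    then have d: "real (tree_deg N w) \<ge> 1" by simp
    then have "tree_col_sum N s w \<le> real (tree_deg N w)" using Suc.IH[of w] by simp
    then show ?thesis using Suc.IH[of w] d by (simp add: divide_le_eq_1)
  qed
  have a: "(\<Sum>i<N v. tree_col_sum N s (v @ [i]) / real (tree_deg N (v @ [i]))) \<le> (\<Sum>i<N v. 1)"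
    using tm by (intro sum_mono) auto
  have a0: "0 \<le> (\<Sum>i<N v. tree_col_sum N s (v @ [i]) / real (tree_deg N (v @ [i])))"
    using tm by (intro sum_nonneg) auto
  have b: "(if v = [] then 0 else tree_col_sum N s (butlast v) / real (tree_deg N (butlast v)))
      \<le> (if v = [] then 0 else 1)" using tm by auto
  have b0: "0 \<le> (if v = [] then 0 else tree_col_sum N s (butlast v) / real (tree_deg N (butlast v)))"
    using tm by auto
  have "tree_col_sum N (Suc s) v \<le> real (N v) + (if v = [] then 0 else 1)"
    using a b by simp
  also have "\<dots> = real (tree_deg N v)" unfolding tree_deg_def by simp
  finally show ?case using a0 b0 by simp
qed

lemma tree_root_upper:
  assumes c: "0 < c" "c < 1"
  shows "tree_root_pr c N \<le> ennreal (max 1 (real (N [])))"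
proof -
  define B where "B = max 1 (real (N []))"
  have "tree_root_pr c N \<le> (\<Sum>s. ennreal ((1 - c) * c ^ s * B))"
    unfolding tree_root_pr_def
  proof (rule suminf_le)
    fix s
    have "tree_col_sum N s [] \<le> B" using tree_col_sum_bound[of N s "[]"] unfolding B_def tree_deg_def by simp
    then show "ennreal ((1 - c) * c ^ s * tree_col_sum N s []) \<le> ennreal ((1 - c) * c ^ s * B)"
      using c by (intro ennreal_leI mult_left_mono) auto
  qed auto
  also have "\<dots> = ennreal (\<Sum>s. (1 - c) * c ^ s * B)"
    by (rule suminf_ennreal2) (use c B_def in \<open>auto intro!: summable_mult2 summable_mult summable_geometric\<close>)
  also have "(\<Sum>s. (1 - c) * c ^ s * B) = B"
  proof -
    have "(\<Sum>s. (1 - c) * c ^ s * B) = (\<Sum>s. c ^ s * ((1 - c) * B))" by (simp add: mult_ac)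
    also have "\<dots> = (\<Sum>s. c ^ s) * ((1 - c) * B)"
      by (rule suminf_mult2[symmetric]) (use c in \<open>simp add: summable_geometric\<close>)
    also have "\<dots> = B" using c by (simp add: suminf_geometric)
    finally show ?thesis .
  qed
  finally show ?thesis unfolding B_def .
qed

lemma tree_root_lower:
  assumes c: "0 < c" "c < 1"
  shows "ennreal ((1 - c) * c * (\<Sum>i<N []. 1 / real (N [i] + 1))) \<le> tree_root_pr c N"
proof -
  let ?f = "\<lambda>s. ennreal ((1 - c) * c ^ s * tree_col_sum N s [])"
  have "?f 1 \<le> (\<Sum>s<2. ?f s)" by (simp add: numeral_2_eq_2)
  also have "\<dots> \<le> suminf ?f" by (rule sum_le_suminf) auto
  finally have "?f 1 \<le> tree_root_pr c N" unfolding tree_root_pr_def .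
  moreover have "tree_col_sum N 1 [] = (\<Sum>i<N []. 1 / real (N [i] + 1))"
    by (simp add: tree_deg_def)
  ultimately show ?thesis by simp
qed


lemma space_ubp[simp]: "space (ubp_tree p) = UNIV"
  unfolding ubp_tree_def space_PiM by (auto simp: PiE_def extensional_def)

lemma sets_ubp_coord[measurable]: "{N. P (N v)} \<in> sets (ubp_tree p)"
proof -
  have "(\<lambda>N. N v) -` {x. P x} \<inter> space (ubp_tree p) \<in> sets (ubp_tree p)"
    by (rule measurable_sets[OF coord_meas]) simp
  then show ?thesis by (simp add: vimage_def)
qed

lemma meas_root_in: "measure (ubp_tree p) {N. N [] \<in> A} = measure_pmf.prob p A"
proof -
  let ?M = "\<lambda>v. measure_pmf (if v = [] then p else size_biased p)"
  define X where "X v = A" for v :: "nat list"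
  have "emeasure (PiM UNIV ?M) (prod_emb UNIV ?M {[]} (Pi\<^sub>E {[]} X)) = (\<Prod>v\<in>{[]}. emeasure (?M v) (X v))"
    by (rule emeasure_PiM_emb) (auto simp: prob_space_measure_pmf)
  also have "\<dots> = emeasure p A" by (simp add: X_def)
  finally have e: "emeasure (PiM UNIV ?M) (prod_emb UNIV ?M {[]} (Pi\<^sub>E {[]} X)) = emeasure p A" .
  have set_eq: "prod_emb UNIV ?M {[]} (Pi\<^sub>E {[]} X) = {N. N [] \<in> A}"
    by (auto simp: prod_emb_def X_def PiE_def extensional_def)
  show ?thesis
    unfolding measure_def using e set_eq unfolding ubp_tree_def by simp
qed

lemma meas_two:
  assumes w: "w \<noteq> []"
  shows "measure (ubp_tree p) {N. N [] \<in> A \<and> N w \<in> B} = measure_pmf.prob p A * measure_pmf.prob (size_biased p) B"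
proof -
  let ?M = "\<lambda>v. measure_pmf (if v = [] then p else size_biased p)"
  define X where "X v = (if v = [] then A else B)" for v :: "nat list"
  have "emeasure (PiM UNIV ?M) (prod_emb UNIV ?M {[], w} (Pi\<^sub>E {[], w} X)) = (\<Prod>v\<in>{[], w}. emeasure (?M v) (X v))"
    by (rule emeasure_PiM_emb) (auto simp: prob_space_measure_pmf)
  also have "\<dots> = emeasure p A * emeasure (size_biased p) B" using w by (simp add: X_def)
  finally have e: "emeasure (PiM UNIV ?M) (prod_emb UNIV ?M {[], w} (Pi\<^sub>E {[], w} X)) = emeasure p A * emeasure (size_biased p) B" .
  have set_eq: "prod_emb UNIV ?M {[], w} (Pi\<^sub>E {[], w} X) = {N. N [] \<in> A \<and> N w \<in> B}"
    using w by (auto simp: prod_emb_def X_def PiE_def extensional_def)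
  have "measure (ubp_tree p) {N. N [] \<in> A \<and> N w \<in> B} = enn2real (emeasure p A * emeasure (size_biased p) B)"
    unfolding measure_def using e set_eq unfolding ubp_tree_def by simp
  also have "\<dots> = measure p A * measure (size_biased p) B"
    by (simp add: enn2real_mult measure_def)
  finally show ?thesis .
qed


lemma tail_small: "\<exists>t::nat. measure_pmf.prob q {j. t < j} \<le> 1/4"
proof -
  have lim: "(\<lambda>t. measure_pmf.prob q {..t}) \<longlonglongrightarrow> measure_pmf.prob q (\<Union>t. {..t::nat})"
    by (rule measure_pmf.finite_Lim_measure_incseq) (auto simp: incseq_def)
  have U: "(\<Union>t. {..t::nat}) = UNIV" by auto
  have "\<forall>\<^sub>F t in sequentially. measure_pmf.prob q {..t} > 3/4"
    using order_tendstoD(1)[OF lim[unfolded U], of "3/4"] by simp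
  then obtain t where t: "measure_pmf.prob q {..t} > 3/4" by (auto simp: eventually_sequentially)
  have "{j. t < j} = UNIV - {..t}" by auto
  then have "measure_pmf.prob q {j. t < j} = 1 - measure_pmf.prob q {..t}"
    using measure_pmf.prob_compl[of "{..t}" q] by simp
  then have "measure_pmf.prob q {j. t < j} \<le> 1/4" using t by simp
  then show ?thesis by blast
qed

lemma card_filter_sum_nat: "real (card {i. i < (m::nat) \<and> P i}) = (\<Sum>i<m. if P i then 1 else 0)"
proof -
  have "real (card {i\<in>{..<m}. P i}) = (\<Sum>i<m. if P i then 1 else 0)" using card_filter_sum[of "{..<m}" P] by simp
  moreover have "{i\<in>{..<m}. P i} = {i. i < m \<and> P i}" by auto
  ultimately show ?thesis by simp
qed

lemma good_event_prob:
  fixes p :: "nat pmf" and t m :: nat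
  assumes q: "measure_pmf.prob (size_biased p) {j. t < j} \<le> 1/4" and m: "m \<ge> 1"
  shows "measure (ubp_tree p) {N. N [] = m \<and> 2 * card {i. i < m \<and> t < N [i]} < m} \<ge> pmf p m / 2"
proof -
  interpret P: prob_space "ubp_tree p" by (rule ubp_prob_space)
  define qt where "qt = measure_pmf.prob (size_biased p) {j. t < j}"
  define G where "G = {N. N [] = m \<and> 2 * card {i. i < m \<and> t < N [i]} < m}"
  define B where "B = {N. N [] = m \<and> m \<le> 2 * card {i. i < m \<and> t < N [i]}}"
  define C where "C i = {N. N [] = m \<and> t < N [i]}" for i :: nat
  define u where "u N = (\<Sum>i<m. indicator (C i) N :: real)" for N
  have Cs: "C i \<in> sets (ubp_tree p)" for i
  proof -
    have "C i = {N. N [] = m} \<inter> {N. t < N [i]}" unfolding C_def by auto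
    then show ?thesis by simp
  qed
  have measC: "measure (ubp_tree p) (C i) = pmf p m * qt" for i
    using meas_two[of "[i]" p "{m}" "{j. t < j}"] unfolding C_def qt_def by (simp add: measure_pmf_single)
  have int: "integrable (ubp_tree p) u" unfolding u_def
  proof (rule Bochner_Integration.integrable_sum)
    fix i show "integrable (ubp_tree p) (indicator (C i) :: _ \<Rightarrow> real)"
      using Cs[of i] by (intro integrable_real_indicator) (auto simp: P.emeasure_eq_measure)
  qed
  have intu: "(\<integral>N. u N \<partial>ubp_tree p) = real m * (pmf p m * qt)"
    unfolding u_def using Cs measC by (subst Bochner_Integration.integral_sum) (auto simp: P.emeasure_eq_measure)
  have markov: "measure (ubp_tree p) {N \<in> space (ubp_tree p). u N \<ge> real m / 2} \<le> (\<integral>N. u N \<partial>ubp_tree p) / (real m / 2)"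
    by (rule integral_Markov_inequality_measure[OF int, where A="space (ubp_tree p)"])
       (use m in \<open>auto simp: u_def simp del: space_ubp intro!: AE_I2 sum_nonneg\<close>)
  have Bsub: "B \<subseteq> {N \<in> space (ubp_tree p). u N \<ge> real m / 2}"
  proof
    fix N assume N: "N \<in> B"
    have Nm: "N [] = m" using N unfolding B_def by simp
    have "u N = (\<Sum>i<m. if t < N [i] then 1 else 0)"
      unfolding u_def C_def using Nm by (intro sum.cong) (auto simp: indicator_def)
    also have "\<dots> = real (card {i. i < m \<and> t < N [i]})" by (rule card_filter_sum_nat[symmetric])
    finally have "u N = real (card {i. i < m \<and> t < N [i]})" .
    then show "N \<in> {N \<in> space (ubp_tree p). u N \<ge> real m / 2}" using N unfolding B_def by auto
  qed
  define F where "F N = real (card {i. i < m \<and> t < N [i]})" for N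
  have Fm: "F \<in> borel_measurable (ubp_tree p)"
  proof -
    have "F = (\<lambda>N. \<Sum>i<m. if t < N [i] then 1 else 0)"
      unfolding F_def using card_filter_sum_nat by auto
    moreover have "(\<lambda>N. \<Sum>i<m. if t < N [i] then 1 else (0::real)) \<in> borel_measurable (ubp_tree p)"
      by (intro borel_measurable_sum) (use nat_fun_meas in auto)
    ultimately show ?thesis by simp
  qed
  have s1: "{N \<in> space (ubp_tree p). real m \<le> 2 * F N} \<in> sets (ubp_tree p)" using Fm by measurable
  have s2: "{N \<in> space (ubp_tree p). 2 * F N < real m} \<in> sets (ubp_tree p)" using Fm by measurable
  have Bs: "B \<in> sets (ubp_tree p)"
  proof -
    have "B = {N. N [] = m} \<inter> {N \<in> space (ubp_tree p). real m \<le> 2 * F N}"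
      unfolding B_def F_def by auto
    then show ?thesis using s1 by simp
  qed
  have Gs: "G \<in> sets (ubp_tree p)"
  proof -
    have "G = {N. N [] = m} \<inter> {N \<in> space (ubp_tree p). 2 * F N < real m}"
      unfolding G_def F_def by auto
    then show ?thesis using s2 by simp
  qed
  have um: "u \<in> borel_measurable (ubp_tree p)" using int by (rule borel_measurable_integrable)
  have us: "{N \<in> space (ubp_tree p). u N \<ge> real m / 2} \<in> sets (ubp_tree p)" using um by measurable
  have "measure (ubp_tree p) B \<le> measure (ubp_tree p) {N \<in> space (ubp_tree p). u N \<ge> real m / 2}"
    by (rule P.finite_measure_mono[OF Bsub us])
  also have "\<dots> \<le> real m * (pmf p m * qt) / (real m / 2)" using markov unfolding intu .
  finally have "measure (ubp_tree p) B \<le> real m * (pmf p m * qt) / (real m / 2)" .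
  also have "\<dots> = 2 * pmf p m * qt" using m by (simp add: field_simps)
  also have "\<dots> \<le> pmf p m / 2"
  proof -
    have "pmf p m * qt \<le> pmf p m * (1/4)" using q unfolding qt_def by (intro mult_left_mono) auto
    then show ?thesis by simp
  qed
  finally have mB: "measure (ubp_tree p) B \<le> pmf p m / 2" .
  have "{N. N [] = m} = G \<union> B" unfolding G_def B_def by auto
  moreover have "G \<inter> B = {}" unfolding G_def B_def by auto
  ultimately have "measure (ubp_tree p) {N. N [] = m} = measure (ubp_tree p) G + measure (ubp_tree p) B"
    using Bs Gs by (simp add: P.finite_measure_Union)
  moreover have "measure (ubp_tree p) {N. N [] = m} = pmf p m"
    using meas_root_in[of p "{m}"] by (simp add: measure_pmf_single)
  ultimately show ?thesis using mB unfolding G_def by simp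
qed


lemma G_sets: "{N. N [] = m \<and> 2 * card {i. i < m \<and> t < N [i]} < m} \<in> sets (ubp_tree p)"
proof -
  define F where "F N = real (card {i. i < m \<and> t < N [i]})" for N
  have Fm: "F \<in> borel_measurable (ubp_tree p)"
  proof -
    have "F = (\<lambda>N. \<Sum>i<m. if t < N [i] then 1 else 0)"
      unfolding F_def using card_filter_sum_nat by auto
    moreover have "(\<lambda>N. \<Sum>i<m. if t < N [i] then 1 else (0::real)) \<in> borel_measurable (ubp_tree p)"
      by (intro borel_measurable_sum) (use nat_fun_meas in auto)
    ultimately show ?thesis by simp
  qed
  have s2: "{N \<in> space (ubp_tree p). 2 * F N < real m} \<in> sets (ubp_tree p)" using Fm by measurable
  have "{N. N [] = m \<and> 2 * card {i. i < m \<and> t < N [i]} < m} = {N. N [] = m} \<inter> {N \<in> space (ubp_tree p). 2 * F N < real m}"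
    unfolding F_def by auto
  then show ?thesis using s2 by simp
qed

lemma good_implies_large:
  assumes c: "0 < c" "c < 1" and k: "k > 0"
    and N: "N [] = m" "2 * card {i. i < m \<and> t < N [i]} < m"
    and mk: "real m > 2 * (real t + 1) / ((1 - c) * c) * k"
  shows "tree_root_pr c N > ennreal k"
proof -
  define Bad where "Bad = {i. i < m \<and> t < N [i]}"
  define Good where "Good = {i. i < m \<and> \<not> t < N [i]}"
  have cnt: "real (card Bad) + real (card Good) = real m"
  proof -
    have "real (card Bad) + real (card Good) = (\<Sum>i<m. (if t < N [i] then 1 else 0) + (if \<not> t < N [i] then 1 else 0))"
      unfolding Bad_def Good_def card_filter_sum_nat sum.distrib by simp
    also have "\<dots> = (\<Sum>i<m. 1)" by (intro sum.cong) auto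
    finally show ?thesis by simp
  qed
  have goodbig: "2 * real (card Good) > real m" using cnt N(2) unfolding Bad_def by linarith
  have "(\<Sum>i<m. 1 / real (N [i] + 1)) \<ge> (\<Sum>i\<in>Good. 1 / real (N [i] + 1))"
    by (rule sum_mono2) (auto simp: Good_def)
  moreover have "(\<Sum>i\<in>Good. 1 / real (N [i] + 1)) \<ge> (\<Sum>i\<in>Good. 1 / (real t + 1))"
    by (intro sum_mono divide_left_mono) (auto simp: Good_def)
  moreover have "(\<Sum>i\<in>Good. 1 / (real t + 1)) = real (card Good) / (real t + 1)" by simp
  ultimately have s1: "(\<Sum>i<m. 1 / real (N [i] + 1)) \<ge> real (card Good) / (real t + 1)" by linarith
  have cc: "(1 - c) * c > 0" using c by simp
  have aux: "a \<noteq> 0 \<Longrightarrow> b \<noteq> 0 \<Longrightarrow> x = a * (b / a * x) / b" for a b x :: real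
    by (simp add: field_simps)
  have "k = (1 - c) * c * (2 * (real t + 1) / ((1 - c) * c) * k) / (2 * (real t + 1))"
    by (rule aux) (use cc in auto)
  also have "\<dots> < (1 - c) * c * real m / (2 * (real t + 1))"
    using mk cc by (intro divide_strict_right_mono mult_strict_left_mono) auto
  also have "\<dots> < (1 - c) * c * (real (card Good) / (real t + 1))"
  proof -
    have "real m / 2 < real (card Good)" using goodbig by simp
    then have "(real m / 2) / (real t + 1) < real (card Good) / (real t + 1)"
      by (intro divide_strict_right_mono) auto
    then have h: "real m / (2 * (real t + 1)) < real (card Good) / (real t + 1)" by simp
    have "(1 - c) * c * real m / (2 * (real t + 1)) = (1 - c) * c * (real m / (2 * (real t + 1)))" by simp
    also have "\<dots> < (1 - c) * c * (real (card Good) / (real t + 1))"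
      by (rule mult_strict_left_mono[OF h cc])
    finally show ?thesis .
  qed
  also have "\<dots> \<le> (1 - c) * c * (\<Sum>i<m. 1 / real (N [i] + 1))"
    using s1 cc by (intro mult_left_mono) auto
  finally have lt: "k < (1 - c) * c * (\<Sum>i<N []. 1 / real (N [i] + 1))" using N(1) by simp
  have "ennreal k < ennreal ((1 - c) * c * (\<Sum>i<N []. 1 / real (N [i] + 1)))"
    using lt k by (subst ennreal_less_iff) auto
  also have "\<dots> \<le> tree_root_pr c N" by (rule tree_root_lower[OF c])
  finally show ?thesis .
qed

lemma tree_lower:
  assumes c: "0 < c" "c < 1"
  shows "\<exists>\<gamma>>0. \<forall>k>0. prob_limit_pr_gt c p k \<ge> measure_pmf.prob p {j. real j > \<gamma> * k} / 2"
proof -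
  obtain t where q: "measure_pmf.prob (size_biased p) {j. t < j} \<le> 1/4" using tail_small by blast
  define \<gamma> where "\<gamma> = 2 * (real t + 1) / ((1 - c) * c)"
  have gpos: "\<gamma> > 0" unfolding \<gamma>_def using c by (intro divide_pos_pos mult_pos_pos) auto
  have "prob_limit_pr_gt c p k \<ge> measure_pmf.prob p {j. real j > \<gamma> * k} / 2" if k: "k > 0" for k
  proof -
    interpret P: prob_space "ubp_tree p" by (rule ubp_prob_space)
    define S where "S = {j. real j > \<gamma> * k}"
    define G where "G m = (if m \<in> S then {N. N [] = m \<and> 2 * card {i. i < m \<and> t < N [i]} < m} else {})" for m
    define E where "E = {N \<in> space (ubp_tree p). tree_root_pr c N > ennreal k}"
    have Gs: "range G \<subseteq> sets (ubp_tree p)" unfolding G_def using G_sets by auto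
    have Gd: "disjoint_family G" unfolding G_def disjoint_family_on_def by auto
    have sumG: "(\<lambda>m. measure (ubp_tree p) (G m)) sums measure (ubp_tree p) (\<Union>m. G m)"
      by (rule P.finite_measure_UNION[OF Gs Gd])
    have As: "range (\<lambda>m. {m} \<inter> S) \<subseteq> sets (measure_pmf p)" by auto
    have Ad: "disjoint_family (\<lambda>m. {m} \<inter> S)" unfolding disjoint_family_on_def by auto
    have sumA: "(\<lambda>m. measure p ({m} \<inter> S)) sums measure p (\<Union>m. {m} \<inter> S)"
      by (rule measure_pmf.finite_measure_UNION[OF As Ad])
    have US: "(\<Union>m. {m} \<inter> S) = S" by auto
    have sumA2: "(\<lambda>m. measure p ({m} \<inter> S) / 2) sums (measure p S / 2)"
      using sums_divide[OF sumA[unfolded US], of 2] .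
    have le: "measure p S / 2 \<le> measure (ubp_tree p) (\<Union>m. G m)"
    proof (rule sums_le[OF _ sumA2 sumG])
      fix m
      show "measure p ({m} \<inter> S) / 2 \<le> measure (ubp_tree p) (G m)"
      proof (cases "m \<in> S")
        case True
        then have "real m > 0" unfolding S_def using gpos k
          by (metis mem_Collect_eq mult_pos_pos order.strict_trans)
        then have m1: "m \<ge> 1" by simp
        have "{m} \<inter> S = {m}" using True by auto
        then show ?thesis using good_event_prob[OF q m1] True unfolding G_def by (simp add: measure_pmf_single)
      next
        case False
        then show ?thesis unfolding G_def by simp
      qed
    qed
    have sub: "(\<Union>m. G m) \<subseteq> E"
    proof
      fix N assume "N \<in> (\<Union>m. G m)"
      then obtain m where m: "m \<in> S" "N [] = m" "2 * card {i. i < m \<and> t < N [i]} < m"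
        unfolding G_def by (auto split: if_splits)
      have "tree_root_pr c N > ennreal k"
        by (rule good_implies_large[OF c k m(2,3)]) (use m(1) in \<open>simp add: S_def \<gamma>_def\<close>)
      then show "N \<in> E" unfolding E_def by simp
    qed
    have Es: "E \<in> sets (ubp_tree p)" unfolding E_def by (rule tree_event_sets)
    have "measure (ubp_tree p) (\<Union>m. G m) \<le> measure (ubp_tree p) E"
      by (rule P.finite_measure_mono[OF sub Es])
    then show ?thesis using le unfolding prob_limit_pr_gt_def E_def S_def by simp
  qed
  then show ?thesis using gpos by blast
qed


lemma tree_upper:
  assumes c: "0 < c" "c < 1" and p0: "pmf p 0 = 0" and k: "k > 0"
  shows "prob_limit_pr_gt c p k \<le> measure_pmf.prob p {j. real j > k}"
proof -
  interpret P: prob_space "ubp_tree p" by (rule ubp_prob_space)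
  show ?thesis
  proof (cases "k \<ge> 1")
    case True
    have sub: "{N \<in> space (ubp_tree p). tree_root_pr c N > ennreal k} \<subseteq> {N. N [] \<in> {j. real j > k}}"
    proof
      fix N assume "N \<in> {N \<in> space (ubp_tree p). tree_root_pr c N > ennreal k}"
      then have "ennreal k < tree_root_pr c N" by simp
      also have "\<dots> \<le> ennreal (max 1 (real (N [])))" by (rule tree_root_upper[OF c])
      finally have "k < max 1 (real (N []))" using k by (subst (asm) ennreal_less_iff) auto
      then show "N \<in> {N. N [] \<in> {j. real j > k}}" using True by auto
    qed
    have "prob_limit_pr_gt c p k \<le> measure (ubp_tree p) {N. N [] \<in> {j. real j > k}}"
      unfolding prob_limit_pr_gt_def by (rule P.finite_measure_mono[OF sub]) simp
    then show ?thesis using meas_root_in[of p "{j. real j > k}"] by simp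
  next
    case False
    have "measure_pmf.prob p (UNIV - {0}) = 1 - pmf p 0"
      using measure_pmf.prob_compl[of "{0}" p] by (simp add: measure_pmf_single)
    then have one: "measure_pmf.prob p (UNIV - {0}) = 1" using p0 by simp
    have "measure_pmf.prob p (UNIV - {0}) \<le> measure_pmf.prob p {j. real j > k}"
      by (rule measure_pmf.finite_measure_mono) (use False in auto)
    then have "measure_pmf.prob p {j. real j > k} \<ge> 1" using one by simp
    moreover have "prob_limit_pr_gt c p k \<le> 1" unfolding prob_limit_pr_gt_def by simp
    ultimately show ?thesis by linarith
  qed
qed

lemma part3:
  fixes L :: "real \<Rightarrow> real" and \<tau> c :: real and p :: "nat pmf"
  assumes c: "0 < c" "c < 1" and p0: "pmf p 0 = 0" and tau: "\<tau> > 1" and sv: "slowly_varying L"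
    and tail: "\<forall>x>0. measure_pmf.prob p {j. real j > x} = L x * x powr (-(\<tau> - 1))"
  shows "\<exists>a. 0 < a \<and> a \<le> 1 \<and>
                (\<forall>k>0. a * L k * k powr (-(\<tau> - 1)) \<le> prob_limit_pr_gt c p k
                       \<and> prob_limit_pr_gt c p k \<le> L k * k powr (-(\<tau> - 1)))"
proof -
  define e where "e = -(\<tau> - 1)"
  obtain \<gamma> where g: "\<gamma> > 0" and low: "\<And>k. k > 0 \<Longrightarrow> prob_limit_pr_gt c p k \<ge> measure_pmf.prob p {j. real j > \<gamma> * k} / 2"
    using tree_lower[OF c, of p] by blast
  have Lpos: "\<And>x. x > 0 \<Longrightarrow> L x > 0" using sv unfolding slowly_varying_def by auto
  have lim: "((\<lambda>x. L (\<gamma> * x) / L x) \<longlongrightarrow> 1) at_top" using sv g unfolding slowly_varying_def by auto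
  have "\<forall>\<^sub>F x in at_top. L (\<gamma> * x) / L x > 1/2" using order_tendstoD(1)[OF lim, of "1/2"] by simp
  then obtain K0 where K0: "\<And>x. x \<ge> K0 \<Longrightarrow> L (\<gamma> * x) / L x > 1/2" by (auto simp: eventually_at_top_linorder)
  define K where "K = max K0 1"
  have Kpos: "K > 0" unfolding K_def by simp
  define a1 where "a1 = \<gamma> powr e / 4"
  define a2 where "a2 = measure_pmf.prob p {j. real j > \<gamma> * K} / 2"
  have a1pos: "a1 > 0" unfolding a1_def using g by simp
  have a2pos: "a2 > 0" unfolding a2_def using tail g Kpos Lpos[of "\<gamma> * K"] by simp
  define a where "a = min 1 (min a1 a2)"
  have apos: "a > 0" unfolding a_def using a1pos a2pos by simp
  have ale: "a \<le> 1" "a \<le> a1" "a \<le> a2" unfolding a_def by auto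
  have "a * L k * k powr e \<le> prob_limit_pr_gt c p k \<and> prob_limit_pr_gt c p k \<le> L k * k powr e"
    if k: "k > 0" for k
  proof
    show "prob_limit_pr_gt c p k \<le> L k * k powr e"
      using tree_upper[OF c p0 k] tail k unfolding e_def by simp
    have PDk: "L k * k powr e = measure_pmf.prob p {j. real j > k}" using tail k unfolding e_def by simp
    have nn: "0 \<le> L k * k powr e" using Lpos[OF k] by simp
    show "a * L k * k powr e \<le> prob_limit_pr_gt c p k"
    proof (cases "k \<ge> K")
      case True
      have r: "L (\<gamma> * k) / L k > 1/2" using K0[of k] True unfolding K_def by simp
      have Lk: "L k > 0" using Lpos[OF k] .
      have "measure_pmf.prob p {j. real j > \<gamma> * k} = L (\<gamma> * k) * (\<gamma> * k) powr e"
        using tail g k unfolding e_def by simp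
      also have "\<dots> = L (\<gamma> * k) * \<gamma> powr e * k powr e" using g k by (simp add: powr_mult)
      also have "\<dots> \<ge> (L k / 2) * \<gamma> powr e * k powr e"
      proof -
        have "L (\<gamma> * k) \<ge> L k / 2" using r Lk by (simp add: field_simps)
        then show ?thesis by (intro mult_right_mono) auto
      qed
      finally have "measure_pmf.prob p {j. real j > \<gamma> * k} / 2 \<ge> a1 * (L k * k powr e)"
        unfolding a1_def by (simp add: field_simps)
      moreover have "a1 * (L k * k powr e) \<ge> a * (L k * k powr e)" using ale nn by (intro mult_right_mono) auto
      ultimately show ?thesis using low[OF k] by (simp add: mult.assoc)
    next
      case False
      have "measure_pmf.prob p {j. real j > \<gamma> * K} \<le> measure_pmf.prob p {j. real j > \<gamma> * k}"
      proof (rule measure_pmf.finite_measure_mono)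
        have "\<gamma> * k \<le> \<gamma> * K" using False g by (intro mult_left_mono) auto
        then show "{j. real j > \<gamma> * K} \<subseteq> {j. real j > \<gamma> * k}" by auto
      qed simp
      then have "a2 \<le> prob_limit_pr_gt c p k" using low[OF k] unfolding a2_def by simp
      moreover have "a * (L k * k powr e) \<le> a"
      proof -
        have "L k * k powr e \<le> 1" unfolding PDk by simp
        then show ?thesis using apos by (simp add: mult_le_cancel_left1)
      qed
      ultimately show ?thesis using ale by (simp add: mult.assoc)
    qed
  qed
  then show ?thesis using apos ale unfolding e_def by blast
qed


lemma p0_from_weak:
  fixes d :: "nat \<Rightarrow> nat \<Rightarrow> nat"
  assumes deg_pos: "\<And>n i. i < n \<Longrightarrow> 1 \<le> d n i"
    and conv_dist: "weak_conv_m (\<lambda>n. measure_pmf (map_pmf real (deg_law (d n) n)))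
                                (measure_pmf (map_pmf real pD))"
  shows "pmf pD 0 = 0"
proof -
  let ?G = "measure_pmf (map_pmf real pD)"
  have cG: "cdf ?G y = pmf pD 0" if y: "0 < y" "y < 1" for y
  proof -
    have "real -` {..y} = {0::nat}"
    proof (rule set_eqI)
      fix x :: nat
      show "x \<in> real -` {..y} \<longleftrightarrow> x \<in> {0}"
      proof
        assume "x \<in> real -` {..y}"
        then have "real x < 1" using y by simp
        then show "x \<in> {0}" by simp
      next
        assume "x \<in> {0}" then show "x \<in> real -` {..y}" using y by simp
      qed
    qed
    then show ?thesis unfolding cdf_def2 by (simp add: measure_pmf_single)
  qed
  have ev: "\<forall>\<^sub>F y in at (1/2::real). cdf ?G y = cdf ?G (1/2)"
    unfolding eventually_at
  proof (rule exI[of _ "1/2"], intro conjI ballI impI)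
    fix y :: real assume "y \<noteq> 1/2 \<and> dist y (1/2) < 1/2"
    then have "\<bar>y - 1/2\<bar> < 1/2" by (simp add: dist_real_def)
    then have "0 < y" "y < 1" by linarith+
    then show "cdf ?G y = cdf ?G (1/2)" using cG[of y] cG[of "1/2"] by simp
  qed simp
  have ic: "isCont (cdf ?G) (1/2)" unfolding isCont_def by (rule tendsto_eventually[OF ev])
  have lim: "(\<lambda>n. cdf (measure_pmf (map_pmf real (deg_law (d n) n))) (1/2)) \<longlonglongrightarrow> cdf ?G (1/2)"
    using conv_dist ic unfolding weak_conv_m_def weak_conv_def by blast
  have ev0: "\<forall>\<^sub>F n in sequentially. cdf (measure_pmf (map_pmf real (deg_law (d n) n))) (1/2) = 0"
    using eventually_ge_at_top[of "1::nat"]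
  proof eventually_elim
    case (elim n)
    have "cdf (measure_pmf (map_pmf real (deg_law (d n) n))) (1/2) = measure_pmf.prob (deg_law (d n) n) {j. real j \<le> 1/2}"
      unfolding cdf_def2 by (simp add: vimage_def)
    also have "\<dots> = real (card {i\<in>{..<n}. real (d n i) \<le> 1/2}) / real n"
      by (rule deg_prob_formula[OF elim])
    also have "{i\<in>{..<n}. real (d n i) \<le> 1/2} = {}"
    proof -
      have "real (d n i) \<ge> 1" if "i < n" for i using deg_pos[OF that] by simp
      then show ?thesis by force
    qed
    finally show ?case by simp
  qed
  have "(\<lambda>n. cdf (measure_pmf (map_pmf real (deg_law (d n) n))) (1/2)) \<longlonglongrightarrow> 0"
    using tendsto_eventually[OF ev0] .
  then have "cdf ?G (1/2) = 0" using lim LIMSEQ_unique by blast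
  then show ?thesis using cG[of "1/2"] by simp
qed


theorem mainTheorem6:
  fixes d :: "nat \<Rightarrow> nat \<Rightarrow> nat" and pD :: "nat pmf" and c :: real
  assumes deg_pos: "\<And>n i. i < n \<Longrightarrow> 1 \<le> d n i"
    and deg_even: "\<And>n. even (\<Sum>i<n. d n i)"
    and conv_dist: "weak_conv_m (\<lambda>n. measure_pmf (map_pmf real (deg_law (d n) n)))
                                (measure_pmf (map_pmf real pD))"
    and D_integrable: "integrable (measure_pmf pD) real"
    and conv_mean: "(\<lambda>n. measure_pmf.expectation (deg_law (d n) n) real)
                      \<longlonglongrightarrow> measure_pmf.expectation pD real"
    and c: "0 < c" "c < 1"
  shows "(\<forall>n\<ge>1. \<forall>k::real. prob_root_pr_gt c (d n) n k
                 \<le> measure_pmf.prob (deg_law (d n) n) {j. real j > k})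
     \<and> (\<forall>\<beta>::real. \<beta> > 4 * measure_pmf.expectation pD real / (c * (1 - c)) \<longrightarrow>
          (\<forall>\<epsilon>>0. \<forall>\<^sub>F k in at_top. \<forall>\<^sub>F n in sequentially.
             prob_root_pr_gt c (d n) n k
               \<ge> (1 - \<epsilon>) * measure_pmf.prob (deg_law (d n) n) {j. real j > \<beta> * k}))
     \<and> (\<forall>(\<tau>::real) (L::real \<Rightarrow> real). \<tau> > 1 \<and> slowly_varying L \<and>
          (\<forall>x>0. measure_pmf.prob pD {j. real j > x} = L x * x powr (-(\<tau> - 1)))
          \<longrightarrow> (\<exists>a. 0 < a \<and> a \<le> 1 \<and>
                (\<forall>k>0. a * L k * k powr (-(\<tau> - 1)) \<le> prob_limit_pr_gt c pD k
                       \<and> prob_limit_pr_gt c pD k \<le> L k * k powr (-(\<tau> - 1)))))"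
  proof (intro conjI allI impI)
  fix n :: nat and k :: real
  assume n: "n \<ge> 1"
  show "prob_root_pr_gt c (d n) n k \<le> measure_pmf.prob (deg_law (d n) n) {j. real j > k}"
    by (rule part1[OF deg_pos[where n=n] deg_even[of n] n c])
next
  fix \<beta> \<epsilon> :: real
  assume b: "\<beta> > 4 * measure_pmf.expectation pD real / (c * (1 - c))" and e: "\<epsilon> > 0"
  show "\<forall>\<^sub>F k in at_top. \<forall>\<^sub>F n in sequentially.
             prob_root_pr_gt c (d n) n k
               \<ge> (1 - \<epsilon>) * measure_pmf.prob (deg_law (d n) n) {j. real j > \<beta> * k}"
    by (rule part2[OF deg_pos deg_even conv_mean c b e])
next
  fix \<tau> :: real and L :: "real \<Rightarrow> real"
  assume h: "\<tau> > 1 \<and> slowly_varying L \<and>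
          (\<forall>x>0. measure_pmf.prob pD {j. real j > x} = L x * x powr (-(\<tau> - 1)))"
  have p0: "pmf pD 0 = 0" by (rule p0_from_weak[OF deg_pos conv_dist])
  show "\<exists>a. 0 < a \<and> a \<le> 1 \<and>
                (\<forall>k>0. a * L k * k powr (-(\<tau> - 1)) \<le> prob_limit_pr_gt c pD k
                       \<and> prob_limit_pr_gt c pD k \<le> L k * k powr (-(\<tau> - 1)))"
    using part3[OF c p0] h by blast
qed

end
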